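(* Let $\gamma$ be a translation-invariant (nonnull) specification and $\mu\in\mathcal M^+_{1,\mathrm{inv}}$ with $\mu(\Omega^{\le0}_\gamma)=1$. Then: (1) uniformly in $\omega\in\Omega$, $$\lim_{n\to\infty}\frac1{|\Lambda_n|}\int_\Omega\log\frac{\gamma_{\Lambda_n}(\sigma|\omega)}{\gamma_{\Lambda_n}(+|\omega)}\,\mu(d\sigma)=\int_\Omega\log\frac{\gamma_0(\sigma^+|\sigma^+)}{\gamma_0(+|\sigma^+)}\,\mu(d\sigma);$$ (2) for every $\nu\in\mathcal G(\gamma)$, $$\lim_{n\to\infty}\frac1{|\Lambda_n|}\int_\Omega\log\frac{\nu(\sigma_{\Lambda_n})}{\nu(+_{\Lambda_n})}\,\mu(d\sigma)=\int_\Omega\log\frac{\gamma_0(\sigma^+|\sigma^+)}{\gamma_0(+|\sigma^+)}\,\mu(d\sigma).$$ In particular, the limit in (2) depends only on the pair $(\gamma,\mu)$.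
   Context: Let $E$ be a finite set containing a distinguished element $+1$, $\Omega=E^{\mathbb Z^d}$ with product topology and Borel $\sigma$-field $\mathcal F$; $\mathcal F_\Lambda$ is generated by the coordinates in $\Lambda$; $\mathcal S$ = finite subsets of $\mathbb Z^d$; $\mu(\sigma_\Lambda)=\mu(\{\omega:\omega_\Lambda=\sigma_\Lambda\})$; local functions are $\mathcal F_\Delta$-measurable for some finite $\Delta$. Translations $(\tau_x\omega)(y)=\omega(x+y)$; $\mathcal M^+_{1,\mathrm{inv}}$ = translation-invariant probability measures. A specification $\gamma=(\gamma_\Lambda)_{\Lambda\in\mathcal S}$ is a family of probability kernels, $\mathcal F_{\Lambda^c}$-measurable in the boundary condition, proper ($\gamma_\Lambda(B|\omega)=1_B(\omega)$ for $B\in\mathcal F_{\Lambda^c}$), consistent ($\int\gamma_\Lambda(A|\omega')\gamma_{\Lambda'}(d\omega'|\omega)=\gamma_{\Lambda'}(A|\omega)$ for $\Lambda\subset\Lambda'$ and all $\omega$), and nonnull ($0<a_\Lambda<\inf_{\sigma,\eta}\gamma_\Lambda(\sigma_\Lambda|\eta)\le\sup_{\sigma,\eta}\gamma_\Lambda(\sigma_\Lambda|\eta)<b_\Lambda<1$); translation-invariant means $\gamma_{\Lambda+x}(A|\omega)=\gamma_\Lambda(\tau_xA|\tau_x\omega)$. $\gamma_\Lambda(\sigma|\omega)$ denotes $\gamma_\Lambda(\{\xi:\xi_\Lambda=\sigma_\Lambda\}|\omega)$, and $\gamma_0(\sigma|\omega)=\gamma_{\{0\}}(\{\xi:\xi(0)=\sigma(0)\}|\omega)$.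 $\mathcal G(\gamma)$: probability measures $\nu$ with $\nu(A|\mathcal F_{\Lambda^c})=\gamma_\Lambda(A|\cdot)$ $\nu$-a.s. for all $\Lambda,A$. $\Omega_\gamma$ is the set of $\omega$ such that $\omega'\mapsto\int f\,d\gamma_\Lambda(\cdot|\omega')$ is continuous at $\omega$ for all $\Lambda\in\mathcal S$ and local $f$. $+$ is the configuration identically $+1$, $+_\Lambda$ its restriction. With $\le$ the lexicographic order, $\sigma^+(x)=\sigma(x)$ if $x\le0$ and $+1$ if $x>0$; $\Omega^{\le0}_\gamma=\{\sigma:\sigma^+\in\Omega_\gamma\}$. $\Lambda_n=[-n,n]^d\cap\mathbb Z^d$. *)

theory Defs
  imports "HOL-Probability.Probability"
begin

text \<open>Sites are the lattice Z^d, rendered as int^'d with 'd a finite linearly ordered index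
type (the order on 'd fixes the coordinate order used by the lexicographic order).\<close>

type_synonym ('e, 'd) config = "(int ^ 'd) \<Rightarrow> 'e"

text \<open>The measurable space Omega with the product sigma-field (= Borel field of the
product topology, since 'e is finite and discrete).\<close>
definition Omega :: "('e, 'd::finite) config measure" where
  "Omega = PiM UNIV (\<lambda>_. count_space UNIV)"

definition F_on :: "(int ^ 'd) set \<Rightarrow> ('e, 'd::finite) config measure" where
  "F_on L = vimage_algebra UNIV (\<lambda>\<omega>. restrict \<omega> L) (PiM L (\<lambda>_. count_space UNIV))"

definition Otop :: "('e, 'd::finite) config topology" where
  "Otop = product_topology (\<lambda>_. discrete_topology UNIV) UNIV"

definition finS :: "(int ^ 'd::finite) set \<Rightarrow> bool" where
  "finS L \<longleftrightarrow> finite L \<and> L \<noteq> {}"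

definition cyl :: "(int ^ 'd::finite) set \<Rightarrow> ('e, 'd) config \<Rightarrow> ('e, 'd) config set" where
  "cyl L \<sigma> = {\<xi>. \<forall>x\<in>L. \<xi> x = \<sigma> x}"

definition tau :: "int ^ 'd::finite \<Rightarrow> ('e, 'd) config \<Rightarrow> ('e, 'd) config" where
  "tau x \<omega> = (\<lambda>y. \<omega> (x + y))"

type_synonym ('e, 'd) spec = "(int ^ 'd) set \<Rightarrow> ('e, 'd) config \<Rightarrow> ('e, 'd) config measure"

text \<open>A (nonnull) specification: gamma L omega is the probability measure gamma_L( . | omega).\<close>
definition is_specification :: "('e, 'd::finite) spec \<Rightarrow> bool" where
  "is_specification \<gamma> \<longleftrightarrow>
     (\<forall>L. finS L \<longrightarrow>
        (\<forall>\<omega>. prob_space (\<gamma> L \<omega>) \<and> sets (\<gamma> L \<omega>) = sets Omega)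
      \<and> (\<forall>A\<in>sets Omega. (\<lambda>\<omega>. measure (\<gamma> L \<omega>) A) \<in> borel_measurable (F_on (- L)))
      \<and> (\<forall>B\<in>sets (F_on (- L)). \<forall>\<omega>. measure (\<gamma> L \<omega>) B = indicator B \<omega>)
      \<and> (\<exists>a b. 0 < a \<and> a < (INF \<sigma>. INF \<eta>. measure (\<gamma> L \<eta>) (cyl L \<sigma>))
              \<and> (SUP \<sigma>. SUP \<eta>. measure (\<gamma> L \<eta>) (cyl L \<sigma>)) < b \<and> b < 1))
   \<and> (\<forall>L L'. finS L \<and> finS L' \<and> L \<subseteq> L' \<longrightarrow>
        (\<forall>A\<in>sets Omega. \<forall>\<omega>.
           (\<integral>\<omega>'. measure (\<gamma> L \<omega>') A \<partial>(\<gamma> L' \<omega>)) = measure (\<gamma> L' \<omega>) A))"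

definition spec_translation_invariant :: "('e, 'd::finite) spec \<Rightarrow> bool" where
  "spec_translation_invariant \<gamma> \<longleftrightarrow>
     (\<forall>L x A \<omega>. finS L \<and> A \<in> sets Omega \<longrightarrow>
        measure (\<gamma> ((\<lambda>y. y + x) ` L) \<omega>) A = measure (\<gamma> L (tau x \<omega>)) (tau x ` A))"

definition inv_prob :: "('e, 'd::finite) config measure \<Rightarrow> bool" where
  "inv_prob \<mu> \<longleftrightarrow> prob_space \<mu> \<and> sets \<mu> = sets Omega \<and>
     (\<forall>x. distr \<mu> Omega (tau x) = \<mu>)"

definition Gibbs :: "('e, 'd::finite) spec \<Rightarrow> ('e, 'd) config measure set" where
  "Gibbs \<gamma> = {\<nu>. prob_space \<nu> \<and> sets \<nu> = sets Omega \<and>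
     (\<forall>L A. finS L \<and> A \<in> sets Omega \<longrightarrow>
        (AE \<omega> in \<nu>. real_cond_exp \<nu> (F_on (- L)) (indicator A) \<omega> = measure (\<gamma> L \<omega>) A))}"

definition local_fun :: "(('e, 'd::finite) config \<Rightarrow> real) \<Rightarrow> bool" where
  "local_fun f \<longleftrightarrow> (\<exists>D. finite D \<and> f \<in> borel_measurable (F_on D))"

definition Omega_gamma :: "('e, 'd::finite) spec \<Rightarrow> ('e, 'd) config set" where
  "Omega_gamma \<gamma> = {\<omega>. \<forall>L f. finS L \<and> local_fun f \<longrightarrow>
      limitin euclideanreal (\<lambda>\<omega>'. \<integral>\<xi>. f \<xi> \<partial>(\<gamma> L \<omega>'))
        (\<integral>\<xi>. f \<xi> \<partial>(\<gamma> L \<omega>)) (nhdsin Otop \<omega>)}"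

definition lex_le :: "int ^ ('d::{finite,linorder}) \<Rightarrow> int ^ ('d::{finite,linorder}) \<Rightarrow> bool" where
  "lex_le x y \<longleftrightarrow> x = y \<or> (\<exists>i. x $ i < y $ i \<and> (\<forall>j<i. x $ j = y $ j))"

text \<open>sigma^+ : sigma on {x <= 0}, +1 (= p) on {x > 0}.\<close>
definition plus_ext :: "'e \<Rightarrow> ('e, 'd::{finite,linorder}) config \<Rightarrow> ('e, 'd) config" where
  "plus_ext p \<sigma> = (\<lambda>x. if lex_le x 0 then \<sigma> x else p)"

definition Lam :: "nat \<Rightarrow> (int ^ 'd::finite) set" where
  "Lam n = {x. \<forall>i. \<bar>x $ i\<bar> \<le> int n}"

definition rhs :: "'e \<Rightarrow> ('e, 'd::{finite,linorder}) spec \<Rightarrow> ('e, 'd) config measure \<Rightarrow> real" where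
  "rhs p \<gamma> \<mu> = (\<integral>\<sigma>. ln (measure (\<gamma> {0} (plus_ext p \<sigma>)) (cyl {0} (plus_ext p \<sigma>))
                      / measure (\<gamma> {0} (plus_ext p \<sigma>)) (cyl {0} (\<lambda>_. p))) \<partial>\<mu>)"

end

theory Submission
  imports Defs
begin


lemma space_Omega[simp]: "space (Omega :: ('e,'d::finite) config measure) = UNIV"
  by (simp add: Omega_def space_PiM)

lemma space_F_on[simp]: "space (F_on L :: ('e,'d::finite) config measure) = UNIV"
  by (simp add: F_on_def)

lemma coord_meas_Omega[measurable]: "(\<lambda>\<omega>. \<omega> y) \<in> measurable (Omega :: ('e,'d::finite) config measure) (count_space UNIV)"
  unfolding Omega_def by (rule measurable_component_singleton) simp

lemma coord_meas_F_on: assumes "y \<in> S"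
  shows "(\<lambda>\<omega>. \<omega> y) \<in> measurable (F_on S :: ('e,'d::finite) config measure) (count_space UNIV)"
proof -
  have r: "(\<lambda>\<omega>. restrict \<omega> S) \<in> measurable (F_on S :: ('e,'d) config measure) (PiM S (\<lambda>_. count_space UNIV))"
    unfolding F_on_def by (rule measurable_vimage_algebra1) (auto simp: space_PiM)
  have c: "(\<lambda>f. f y) \<in> measurable (PiM S (\<lambda>_. count_space UNIV)) (count_space (UNIV::'e set))"
    by (rule measurable_component_singleton) (use assms in auto)
  have "(\<lambda>\<omega>. (restrict \<omega> S) y) \<in> measurable (F_on S :: ('e,'d) config measure) (count_space UNIV)"
    using measurable_comp[OF r c] by (simp add: comp_def)
  then show ?thesis using assms by simp
qed

lemma sets_F_on_eq: "sets (F_on S :: ('e,'d::finite) config measure) = (\<lambda>A. (\<lambda>\<omega>. restrict \<omega> S) -` A \<inter> UNIV) ` sets (PiM S (\<lambda>_. count_space UNIV))"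
  unfolding F_on_def by (subst sets_vimage_algebra2) (auto simp: space_PiM)

lemma sets_F_on_sub: "sets (F_on S :: ('e,'d::finite) config measure) \<subseteq> sets Omega"
proof
  fix A assume "A \<in> sets (F_on S :: ('e,'d) config measure)"
  then obtain B where B: "B \<in> sets (PiM S (\<lambda>_. count_space UNIV))" and A: "A = (\<lambda>\<omega>. restrict \<omega> S) -` B \<inter> UNIV"
    unfolding sets_F_on_eq by auto
  have "(\<lambda>\<omega>. restrict \<omega> S) \<in> measurable (Omega :: ('e,'d) config measure) (PiM S (\<lambda>_. count_space UNIV))"
    by (rule measurable_restrict) simp
  from measurable_sets[OF this B] show "A \<in> sets Omega" using A by simp
qed

lemma F_on_meas_Omega: "f \<in> measurable (F_on S :: ('e,'d::finite) config measure) N \<Longrightarrow> f \<in> measurable Omega N"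
  using sets_F_on_sub unfolding measurable_def by auto

lemma F_on_dep: fixes f :: "_ \<Rightarrow> real" assumes "f \<in> borel_measurable (F_on S :: ('e,'d::finite) config measure)"
  and "\<And>x. x \<in> S \<Longrightarrow> \<omega> x = \<omega>' x"
  shows "f \<omega> = f \<omega>'"
proof -
  have "f -` {f \<omega>} \<inter> space (F_on S) \<in> sets (F_on S :: ('e,'d) config measure)"
    using assms(1) by (rule measurable_sets) simp
  then obtain B where B: "f -` {f \<omega>} = (\<lambda>\<omega>. restrict \<omega> S) -` B \<inter> UNIV"
    unfolding sets_F_on_eq by auto
  have "restrict \<omega> S = restrict \<omega>' S" using assms(2) by (auto simp: restrict_def)
  moreover have "\<omega> \<in> f -` {f \<omega>}" by simp
  ultimately have "\<omega>' \<in> f -` {f \<omega>}" unfolding B by auto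
  then show ?thesis by simp
qed

lemma cyl_sets_F_on: assumes "finite D" "D \<subseteq> S"
  shows "cyl D \<sigma> \<in> sets (F_on S :: ('e,'d::finite) config measure)"
proof -
  have "cyl D \<sigma> = {\<omega> \<in> space (F_on S :: ('e,'d) config measure). \<forall>x\<in>D. \<omega> x = \<sigma> x}"
    by (auto simp: cyl_def)
  also have "\<dots> \<in> sets (F_on S)"
  proof (rule sets.sets_Collect_finite_All[OF _ assms(1)])
    fix x assume "x \<in> D"
    then have "(\<lambda>\<omega>. \<omega> x) \<in> measurable (F_on S :: ('e,'d) config measure) (count_space UNIV)"
      using assms coord_meas_F_on by blast
    then show "{\<omega> \<in> space (F_on S :: ('e,'d) config measure). \<omega> x = \<sigma> x} \<in> sets (F_on S)"
      by measurable
  qed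
  finally show ?thesis .
qed

lemma cyl_sets_Omega[measurable]: assumes "finite D"
  shows "cyl D \<sigma> \<in> sets (Omega :: ('e,'d::finite) config measure)"
  using cyl_sets_F_on[OF assms subset_UNIV] sets_F_on_sub by blast

lemma finite_restrictions: "finite D \<Longrightarrow> finite ((\<lambda>\<sigma>. restrict \<sigma> D) ` (UNIV :: ('e::finite,'d::finite) config set))"
  by (rule finite_subset[of _ "PiE D (\<lambda>_. UNIV)"]) (auto intro: finite_PiE)

lemma finite_cyls: "finite D \<Longrightarrow> finite ((\<lambda>\<sigma>. cyl D \<sigma>) ` (UNIV :: ('e::finite,'d::finite) config set))"
proof -
  assume f: "finite D"
  have "(\<lambda>\<sigma>. cyl D \<sigma>) ` (UNIV :: ('e,'d) config set) = (\<lambda>r. cyl D r) ` ((\<lambda>\<sigma>. restrict \<sigma> D) ` UNIV)"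
    by (auto simp: cyl_def image_iff restrict_def) (metis (mono_tags, lifting))
  then show ?thesis using finite_restrictions[OF f] by (metis finite_imageI)
qed

lemma local_meas: assumes "finite D" and dep: "\<And>\<sigma> \<sigma>'. (\<And>x. x \<in> D \<Longrightarrow> \<sigma> x = \<sigma>' x) \<Longrightarrow> f \<sigma> = f \<sigma>'"
  and sp: "\<And>\<sigma>. f \<sigma> \<in> space N"
  shows "f \<in> measurable (Omega :: ('e::finite,'d::finite) config measure) N"
proof (rule measurableI)
  show "f x \<in> space N" for x using sp by blast
next
  fix B assume "B \<in> sets N"
  have eq: "f -` B \<inter> space Omega = \<Union> ((\<lambda>\<sigma>. cyl D \<sigma>) ` {\<sigma>. f \<sigma> \<in> B})"
  proof (intro set_eqI iffI)
    fix x assume "x \<in> f -` B \<inter> space Omega"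
    then show "x \<in> \<Union> ((\<lambda>\<sigma>. cyl D \<sigma>) ` {\<sigma>. f \<sigma> \<in> B})" by (auto simp: cyl_def)
  next
    fix x assume "x \<in> \<Union> ((\<lambda>\<sigma>. cyl D \<sigma>) ` {\<sigma>. f \<sigma> \<in> B})"
    then obtain \<sigma> where "f \<sigma> \<in> B" "\<forall>y\<in>D. x y = \<sigma> y" by (auto simp: cyl_def)
    then show "x \<in> f -` B \<inter> space Omega" using dep[of x \<sigma>] by auto
  qed
  have "finite ((\<lambda>\<sigma>. cyl D \<sigma>) ` {\<sigma>. f \<sigma> \<in> B})"
    by (rule finite_subset[OF _ finite_cyls[OF assms(1)]]) auto
  then have "\<Union> ((\<lambda>\<sigma>. cyl D \<sigma>) ` {\<sigma>. f \<sigma> \<in> B}) \<in> sets (Omega :: ('e,'d) config measure)"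
    by (intro sets.finite_Union) (auto intro: cyl_sets_Omega[OF assms(1)])
  then show "f -` B \<inter> space Omega \<in> sets Omega" using eq by simp
qed

lemma countable_vec: "countable (UNIV :: (int ^ 'd::finite) set)"
proof -
  have "countable (PiE (UNIV::'d set) (\<lambda>_. UNIV :: int set))"
    by (rule countable_PiE) auto
  then have "countable (vec_lambda ` PiE (UNIV::'d set) (\<lambda>_. UNIV :: int set))" by simp
  moreover have "vec_lambda ` PiE (UNIV::'d set) (\<lambda>_. UNIV :: int set) = UNIV"
  proof -
    have "x = vec_lambda (vec_nth x)" for x :: "int^'d" by simp
    then show ?thesis by (auto simp: image_iff) (metis PiE_UNIV_domain UNIV_I vec_lambda_eta)
  qed
  ultimately show ?thesis by simp
qed


lemma finS_single[simp]: "finS {x}" by (simp add: finS_def)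

context
  fixes \<gamma> :: "('e::finite, 'd::finite) spec"
  assumes spec: "is_specification \<gamma>"
begin

lemma sp_prob: "finS L \<Longrightarrow> prob_space (\<gamma> L \<omega>)"
  using spec unfolding is_specification_def by blast

lemma sp_sets: "finS L \<Longrightarrow> sets (\<gamma> L \<omega>) = sets Omega"
  using spec unfolding is_specification_def by blast

lemma sp_meas_F: "finS L \<Longrightarrow> A \<in> sets Omega \<Longrightarrow> (\<lambda>\<omega>. measure (\<gamma> L \<omega>) A) \<in> borel_measurable (F_on (- L))"
  using spec unfolding is_specification_def by blast

lemma sp_meas: "finS L \<Longrightarrow> A \<in> sets Omega \<Longrightarrow> (\<lambda>\<omega>. measure (\<gamma> L \<omega>) A) \<in> borel_measurable Omega"
  using sp_meas_F F_on_meas_Omega by blast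

lemma sp_proper: "finS L \<Longrightarrow> B \<in> sets (F_on (- L)) \<Longrightarrow> measure (\<gamma> L \<omega>) B = indicator B \<omega>"
  using spec unfolding is_specification_def by blast

lemma sp_consistent: "finS L \<Longrightarrow> finS L' \<Longrightarrow> L \<subseteq> L' \<Longrightarrow> A \<in> sets Omega \<Longrightarrow>
   (\<integral>\<omega>'. measure (\<gamma> L \<omega>') A \<partial>(\<gamma> L' \<omega>)) = measure (\<gamma> L' \<omega>) A"
  using spec unfolding is_specification_def by blast

lemma sp_dep: "finS L \<Longrightarrow> A \<in> sets Omega \<Longrightarrow> (\<And>y. y \<notin> L \<Longrightarrow> \<omega> y = \<omega>' y) \<Longrightarrow>
   measure (\<gamma> L \<omega>) A = measure (\<gamma> L \<omega>') A"
  using F_on_dep[OF sp_meas_F, of L A \<omega> \<omega>'] by auto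

lemma sp_nonnull: assumes "finS L" shows "\<exists>a>0. \<forall>\<sigma> \<eta>. a < measure (\<gamma> L \<eta>) (cyl L \<sigma>)"
proof -
  obtain a b where ab: "0 < a" "a < (INF \<sigma>. INF \<eta>. measure (\<gamma> L \<eta>) (cyl L \<sigma>))"
    using spec assms unfolding is_specification_def by blast
  have bdd: "bdd_below (range (\<lambda>\<eta>. measure (\<gamma> L \<eta>) (cyl L \<sigma>)))" for \<sigma>
    by (rule bdd_belowI[of _ 0]) auto
  have bdd2: "bdd_below (range (\<lambda>\<sigma>. INF \<eta>. measure (\<gamma> L \<eta>) (cyl L \<sigma>)))"
    by (rule bdd_belowI[of _ 0]) (auto intro!: cINF_greatest)
  have "a < measure (\<gamma> L \<eta>) (cyl L \<sigma>)" for \<sigma> \<eta>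
  proof -
    have "(INF \<sigma>. INF \<eta>. measure (\<gamma> L \<eta>) (cyl L \<sigma>)) \<le> (INF \<eta>. measure (\<gamma> L \<eta>) (cyl L \<sigma>))"
      by (rule cINF_lower[OF bdd2]) simp
    also have "\<dots> \<le> measure (\<gamma> L \<eta>) (cyl L \<sigma>)"
      by (rule cINF_lower[OF bdd]) simp
    finally show ?thesis using ab by simp
  qed
  then show ?thesis using ab by blast
qed

lemma prob_split: assumes "prob_space P" "B \<in> sets P" "C \<in> sets P" "measure P B = indicator B \<omega>"
  shows "measure P (B \<inter> C) = indicator B \<omega> * measure P C"
proof (cases "\<omega> \<in> B")
  case True
  interpret prob_space P by fact
  have "prob B = 1" using assms True by simp
  have B': "space P - B \<in> sets P" using assms by auto
  have "prob (C - B) \<le> prob (space P - B)"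
    using assms B' sets.sets_into_space[OF assms(3)] by (intro finite_measure_mono) auto
  also have "\<dots> = 0" using prob_compl[OF assms(2)] \<open>prob B = 1\<close> by simp
  finally have "prob (C - B) = 0" using measure_nonneg[of P "C - B"] by linarith
  moreover have "prob C = prob (B \<inter> C) + prob (C - B)"
  proof -
    have "C = (B \<inter> C) \<union> (C - B)" by auto
    then have "prob C = prob ((B \<inter> C) \<union> (C - B))" by simp
    also have "\<dots> = prob (B \<inter> C) + prob (C - B)"
      using assms by (intro finite_measure_Union) auto
    finally show ?thesis .
  qed
  ultimately show ?thesis using True by simp
next
  case False
  interpret prob_space P by fact
  have "prob (B \<inter> C) \<le> prob B" using assms by (intro finite_measure_mono) auto
  then show ?thesis using False assms by (simp add: measure_le_0_iff)
qed

lemma single_site_aux: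
  assumes L: "finS \<Lambda>" and x: "x \<in> \<Lambda>"
    and th: "\<And>y. y \<in> \<Lambda> \<Longrightarrow> y \<noteq> x \<Longrightarrow> \<theta> y = \<eta> y"
  shows "measure (\<gamma> \<Lambda> \<omega>) (cyl \<Lambda> \<theta>)
       = measure (\<gamma> {x} (\<lambda>y. if y \<in> \<Lambda> then \<eta> y else \<omega> y)) (cyl {x} \<theta>) * measure (\<gamma> \<Lambda> \<omega>) (cyl (\<Lambda> - {x}) \<eta>)"
proof -
  define \<zeta> where "\<zeta> = (\<lambda>y. if y \<in> \<Lambda> then \<eta> y else \<omega> y)"
  define P where "P = \<gamma> \<Lambda> \<omega>"
  define B where "B = cyl (\<Lambda> - {x}) \<eta>"
  have finL: "finite \<Lambda>" using L by (simp add: finS_def)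
  have PP: "prob_space P" unfolding P_def using sp_prob[OF L] .
  have sP: "sets P = sets Omega" unfolding P_def using sp_sets[OF L] .
  have Bth: "B = cyl (\<Lambda> - {x}) \<theta>" unfolding B_def cyl_def using th by auto
  have BF: "B \<in> sets (F_on (- {x}))" unfolding B_def by (rule cyl_sets_F_on) (use finL in auto)
  have BO: "B \<in> sets Omega" using BF sets_F_on_sub by blast
  have cyleq: "cyl \<Lambda> \<theta> = B \<inter> cyl {x} \<theta>" unfolding Bth cyl_def using x by auto
  have split: "measure (\<gamma> {x} \<omega>') (cyl \<Lambda> \<theta>) = indicator B \<omega>' * measure (\<gamma> {x} \<omega>') (cyl {x} \<theta>)" for \<omega>'
    unfolding cyleq
    by (rule prob_split) (use sp_prob sp_sets sp_proper[OF finS_single BF] BO in auto)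
  have AEW0: "AE \<omega>' in P. \<forall>y\<in>UNIV. y \<notin> \<Lambda> \<longrightarrow> \<omega>' y = \<omega> y"
  proof (rule AE_ball_countable')
    show "countable (UNIV :: (int^'d) set)" by (rule countable_vec)
  next
    fix y :: "int^'d"
    show "AE \<omega>' in P. y \<notin> \<Lambda> \<longrightarrow> \<omega>' y = \<omega> y"
    proof (cases "y \<in> \<Lambda>")
      case False
      have CF: "cyl {y} \<omega> \<in> sets (F_on (- \<Lambda>))" by (rule cyl_sets_F_on) (use False in auto)
      have "measure P (cyl {y} \<omega>) = 1" unfolding P_def using sp_proper[OF L CF] by (simp add: cyl_def)
      then have "AE \<omega>' in P. \<omega>' \<in> cyl {y} \<omega>"
        using prob_space.AE_prob_1[OF PP] CF sets_F_on_sub sP by blast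
      then show ?thesis by (auto simp: cyl_def)
    qed simp
  qed
  then have AEW: "AE \<omega>' in P. \<forall>y. y \<notin> \<Lambda> \<longrightarrow> \<omega>' y = \<omega> y" by simp
  have "measure P (cyl \<Lambda> \<theta>) = (\<integral>\<omega>'. measure (\<gamma> {x} \<omega>') (cyl \<Lambda> \<theta>) \<partial>P)"
    unfolding P_def by (rule sp_consistent[symmetric]) (use L x finL in auto)
  also have "\<dots> = (\<integral>\<omega>'. indicator B \<omega>' * measure (\<gamma> {x} \<zeta>) (cyl {x} \<theta>) \<partial>P)"
  proof (rule integral_cong_AE)
    show "(\<lambda>\<omega>'. measure (\<gamma> {x} \<omega>') (cyl \<Lambda> \<theta>)) \<in> borel_measurable P"
      using sp_meas[OF finS_single cyl_sets_Omega[OF finL]] measurable_cong_sets[OF sP refl] by blast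
    show "(\<lambda>\<omega>'. indicator B \<omega>' * measure (\<gamma> {x} \<zeta>) (cyl {x} \<theta>)) \<in> borel_measurable P"
      using BO sP by measurable
    show "AE \<omega>' in P. measure (\<gamma> {x} \<omega>') (cyl \<Lambda> \<theta>) = indicator B \<omega>' * measure (\<gamma> {x} \<zeta>) (cyl {x} \<theta>)"
      using AEW
    proof eventually_elim
      case (elim \<omega>')
      show ?case
      proof (cases "\<omega>' \<in> B")
        case True
        have "measure (\<gamma> {x} \<omega>') (cyl {x} \<theta>) = measure (\<gamma> {x} \<zeta>) (cyl {x} \<theta>)"
        proof (rule sp_dep)
          fix y assume "y \<notin> {x}"
          then show "\<omega>' y = \<zeta> y" using True elim unfolding B_def cyl_def \<zeta>_def by auto
        qed auto
        then show ?thesis using split by simp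
      qed (simp add: split)
    qed
  qed
  also have "\<dots> = measure P B * measure (\<gamma> {x} \<zeta>) (cyl {x} \<theta>)"
    using BO sP by (simp add: prob_space.prob_space[OF PP])
  finally show ?thesis unfolding P_def B_def \<zeta>_def by simp
qed

lemma single_site:
  assumes L: "finS \<Lambda>" and x: "x \<in> \<Lambda>"
    and th: "\<And>y. y \<noteq> x \<Longrightarrow> \<eta>' y = \<eta> y"
  shows "measure (\<gamma> \<Lambda> \<omega>) (cyl \<Lambda> \<eta>) * measure (\<gamma> {x} (\<lambda>y. if y \<in> \<Lambda> then \<eta> y else \<omega> y)) (cyl {x} \<eta>')
       = measure (\<gamma> \<Lambda> \<omega>) (cyl \<Lambda> \<eta>') * measure (\<gamma> {x} (\<lambda>y. if y \<in> \<Lambda> then \<eta> y else \<omega> y)) (cyl {x} \<eta>)"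
  using single_site_aux[OF L x, of \<eta> \<eta> \<omega>] single_site_aux[OF L x, of \<eta>' \<eta> \<omega>] th
  by (simp add: mult_ac)

end


section \<open>Lexicographic order\<close>

lemma lex_refl[simp]: "lex_le x x" by (simp add: lex_le_def)

lemma lex_antisym: assumes "lex_le x y" "lex_le y x" shows "x = y"
proof (rule ccontr)
  assume ne: "x \<noteq> y"
  then obtain i where i: "x $ i < y $ i" "\<forall>j<i. x $ j = y $ j" using assms(1) by (auto simp: lex_le_def)
  obtain k where k: "y $ k < x $ k" "\<forall>j<k. y $ j = x $ j" using assms(2) ne by (auto simp: lex_le_def)
  show False
  proof (cases i k rule: linorder_cases)
    case less
    then have "y $ i = x $ i" using k(2) by blast
    then show ?thesis using i(1) by simp
  next
    case equal then show ?thesis using i(1) k(1) by simp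
  next
    case greater
    then have "y $ k = x $ k" using i(2) by metis
    then show ?thesis using k(1) by simp
  qed
qed

lemma lex_trans: assumes "lex_le x y" "lex_le y z" shows "lex_le x z"
proof (cases "x = y \<or> y = z")
  case True then show ?thesis using assms by auto
next
  case False
  then obtain i where i: "x $ i < y $ i" "\<forall>j<i. x $ j = y $ j" using assms(1) by (auto simp: lex_le_def)
  obtain k where k: "y $ k < z $ k" "\<forall>j<k. y $ j = z $ j" using assms(2) False by (auto simp: lex_le_def)
  have "\<exists>m. x $ m < z $ m \<and> (\<forall>j<m. x $ j = z $ j)"
  proof (cases i k rule: linorder_cases)
    case less
    have "x $ i < z $ i" using i(1) k(2) less by metis
    moreover have "\<forall>j<i. x $ j = z $ j" using i(2) k(2) less by (metis order.strict_trans)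
    ultimately show ?thesis by blast
  next
    case equal
    have "x $ i < z $ i" using i(1) k(1) equal by simp
    moreover have "\<forall>j<i. x $ j = z $ j" using i(2) k(2) equal by metis
    ultimately show ?thesis by blast
  next
    case greater
    have "x $ k < z $ k" using i(2) k(1) greater by metis
    moreover have "\<forall>j<k. x $ j = z $ j" using i(2) k(2) greater by (metis order.strict_trans)
    ultimately show ?thesis by blast
  qed
  then show ?thesis unfolding lex_le_def by blast
qed

lemma lex_total: "lex_le x y \<or> lex_le y x"
proof (cases "x = y")
  case False
  define D where "D = {i. x $ i \<noteq> y $ i}"
  have "D \<noteq> {}" using False unfolding D_def by (auto simp: vec_eq_iff)
  moreover have "finite D" by simp
  ultimately have m1: "Min D \<in> D" by (rule Min_in[rotated])
  have m2: "\<forall>j<Min D. x $ j = y $ j"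
  proof (intro allI impI)
    fix j assume j: "j < Min D"
    show "x $ j = y $ j"
    proof (rule ccontr)
      assume "x $ j \<noteq> y $ j"
      then have "j \<in> D" unfolding D_def by simp
      then have "Min D \<le> j" using \<open>finite D\<close> by simp
      then show False using j by simp
    qed
  qed
  have m2': "\<forall>j<Min D. y $ j = x $ j" using m2 by simp
  show ?thesis
  proof (cases "x $ Min D < y $ Min D")
    case True then show ?thesis using m2 unfolding lex_le_def by blast
  next
    case F: False
    then have "y $ Min D < x $ Min D" using m1 unfolding D_def by auto
    then show ?thesis using m2' unfolding lex_le_def by blast
  qed
qed simp

lemma lex_shift: "lex_le (x + y) (x + z) \<longleftrightarrow> lex_le y z"
proof -
  have a: "(x + y = x + z) \<longleftrightarrow> y = z" by simp
  have b: "\<And>i. (x + y) $ i < (x + z) $ i \<longleftrightarrow> y $ i < z $ i" by simp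
  have c: "\<And>i. (x + y) $ i = (x + z) $ i \<longleftrightarrow> y $ i = z $ i" by simp
  show ?thesis unfolding lex_le_def a b c ..
qed

lemma lex_shift0: "lex_le (x + y) x \<longleftrightarrow> lex_le y 0"
proof -
  have "lex_le (x + y) (x + 0) \<longleftrightarrow> lex_le y 0" by (rule lex_shift)
  then show ?thesis by (simp only: add_0_right)
qed

lemma lex_max: assumes "finite S" "S \<noteq> {}" shows "\<exists>m\<in>S. \<forall>y\<in>S. lex_le y m"
  using assms
proof (induction S rule: finite_ne_induct)
  case (singleton x) then show ?case by simp
next
  case (insert x F)
  then obtain m where m: "m \<in> F" "\<forall>y\<in>F. lex_le y m" by blast
  show ?case
  proof (cases "lex_le x m")
    case True then show ?thesis using m by auto
  next
    case False
    then have mx: "lex_le m x" using lex_total by blast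
    have "\<forall>y\<in>insert x F. lex_le y x"
    proof
      fix y assume "y \<in> insert x F"
      then show "lex_le y x"
      proof
        assume "y \<in> F" then have "lex_le y m" using m by blast
        then show ?thesis using mx by (rule lex_trans)
      qed simp
    qed
    then show ?thesis by blast
  qed
qed

lemma tau_tau: "tau x (tau y \<omega>) = tau (y + x) \<omega>"
  by (simp add: tau_def add.assoc)

lemma tau_image_cyl0: "tau x ` cyl {x} \<theta> = cyl {0} (tau x \<theta>)"
proof (intro set_eqI iffI)
  fix ch assume "ch \<in> cyl {0} (tau x \<theta>)"
  then have "tau (- x) ch \<in> cyl {x} \<theta>" "ch = tau x (tau (-x) ch)"
    by (auto simp: cyl_def tau_def)
  then show "ch \<in> tau x ` cyl {x} \<theta>" by blast
qed (auto simp: cyl_def tau_def)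

lemma tau_meas[measurable]: "tau x \<in> measurable (Omega :: ('e,'d::finite) config measure) Omega"
  unfolding Omega_def tau_def
  by (rule measurable_PiM_single') (auto intro: measurable_component_singleton simp: space_PiM)


definition etaS :: "'e \<Rightarrow> (int^'d) set \<Rightarrow> ('e,'d) config \<Rightarrow> ('e,'d) config \<Rightarrow> (int^'d) set \<Rightarrow> ('e,'d) config" where
  "etaS p \<Lambda> \<sigma> \<omega> S = (\<lambda>y. if y \<in> S then \<sigma> y else if y \<in> \<Lambda> then p else \<omega> y)"

definition Gs :: "('e,'d::finite) spec \<Rightarrow> 'e \<Rightarrow> int^'d \<Rightarrow> ('e,'d) config \<Rightarrow> real" where
  "Gs \<gamma> p x \<zeta> = ln (measure (\<gamma> {x} \<zeta>) (cyl {x} \<zeta>) / measure (\<gamma> {x} \<zeta>) (cyl {x} (\<lambda>_. p)))"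

context
  fixes \<gamma> :: "('e::finite, 'd::{finite,linorder}) spec"
  assumes spec: "is_specification \<gamma>"
begin

lemma sp_pos: "finS L \<Longrightarrow> 0 < measure (\<gamma> L \<eta>) (cyl L \<sigma>)"
  using sp_nonnull[OF spec] by (meson less_trans)

lemma telescope:
  assumes L: "finS \<Lambda>" and S: "S \<subseteq> \<Lambda>"
  shows "ln (measure (\<gamma> \<Lambda> \<omega>) (cyl \<Lambda> (etaS p \<Lambda> \<sigma> \<omega> S))) - ln (measure (\<gamma> \<Lambda> \<omega>) (cyl \<Lambda> (etaS p \<Lambda> \<sigma> \<omega> {})))
     = (\<Sum>x\<in>S. Gs \<gamma> p x (etaS p \<Lambda> \<sigma> \<omega> {y\<in>S. lex_le y x}))"
proof -
  have finS: "finite S" using S L finite_subset by (auto simp: finS_def)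
  have "S \<subseteq> \<Lambda> \<longrightarrow> ln (measure (\<gamma> \<Lambda> \<omega>) (cyl \<Lambda> (etaS p \<Lambda> \<sigma> \<omega> S))) - ln (measure (\<gamma> \<Lambda> \<omega>) (cyl \<Lambda> (etaS p \<Lambda> \<sigma> \<omega> {})))
     = (\<Sum>x\<in>S. Gs \<gamma> p x (etaS p \<Lambda> \<sigma> \<omega> {y\<in>S. lex_le y x}))"
    using finS
  proof (induction S rule: finite_remove_induct)
    case empty then show ?case by simp
  next
    case (remove A)
    show ?case
    proof
      assume AL: "A \<subseteq> \<Lambda>"
      obtain m where m: "m \<in> A" "\<forall>y\<in>A. lex_le y m" using lex_max[OF remove(1,2)] by blast
      define A' where "A' = A - {m}"
      have IH: "ln (measure (\<gamma> \<Lambda> \<omega>) (cyl \<Lambda> (etaS p \<Lambda> \<sigma> \<omega> A'))) - ln (measure (\<gamma> \<Lambda> \<omega>) (cyl \<Lambda> (etaS p \<Lambda> \<sigma> \<omega> {})))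
         = (\<Sum>x\<in>A'. Gs \<gamma> p x (etaS p \<Lambda> \<sigma> \<omega> {y\<in>A'. lex_le y x}))"
        using remove(4)[OF m(1)] AL unfolding A'_def by auto
      have mL: "m \<in> \<Lambda>" using m AL by auto
      have diff: "\<And>y. y \<noteq> m \<Longrightarrow> etaS p \<Lambda> \<sigma> \<omega> A' y = etaS p \<Lambda> \<sigma> \<omega> A y"
        unfolding etaS_def A'_def by auto
      have zeta: "(\<lambda>y. if y \<in> \<Lambda> then etaS p \<Lambda> \<sigma> \<omega> A y else \<omega> y) = etaS p \<Lambda> \<sigma> \<omega> A"
        using AL unfolding etaS_def by (auto intro!: ext)
      have cp: "cyl {m} (etaS p \<Lambda> \<sigma> \<omega> A') = cyl {m} (\<lambda>_. p)"
        using mL unfolding etaS_def A'_def cyl_def by auto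
      define \<zeta> where "\<zeta> = etaS p \<Lambda> \<sigma> \<omega> A"
      define a where "a = measure (\<gamma> \<Lambda> \<omega>) (cyl \<Lambda> (etaS p \<Lambda> \<sigma> \<omega> A))"
      define a' where "a' = measure (\<gamma> \<Lambda> \<omega>) (cyl \<Lambda> (etaS p \<Lambda> \<sigma> \<omega> A'))"
      define c where "c = measure (\<gamma> {m} \<zeta>) (cyl {m} \<zeta>)"
      define c' where "c' = measure (\<gamma> {m} \<zeta>) (cyl {m} (\<lambda>_. p))"
      have eq: "a * c' = a' * c"
      proof -
        have "measure (\<gamma> \<Lambda> \<omega>) (cyl \<Lambda> (etaS p \<Lambda> \<sigma> \<omega> A)) * measure (\<gamma> {m} (\<lambda>y. if y \<in> \<Lambda> then etaS p \<Lambda> \<sigma> \<omega> A y else \<omega> y)) (cyl {m} (etaS p \<Lambda> \<sigma> \<omega> A'))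
       = measure (\<gamma> \<Lambda> \<omega>) (cyl \<Lambda> (etaS p \<Lambda> \<sigma> \<omega> A')) * measure (\<gamma> {m} (\<lambda>y. if y \<in> \<Lambda> then etaS p \<Lambda> \<sigma> \<omega> A y else \<omega> y)) (cyl {m} (etaS p \<Lambda> \<sigma> \<omega> A))"
          by (rule single_site[OF spec L mL]) (rule diff)
        then show ?thesis unfolding zeta cp a_def a'_def c_def c'_def \<zeta>_def .
      qed
      have pos: "a > 0" "a' > 0" "c > 0" "c' > 0"
        unfolding a_def a'_def c_def c'_def using sp_pos L by auto
      have "ln a - ln a' = ln (c / c')"
      proof -
        have "a / a' = c / c'" using eq pos by (simp add: field_simps)
        then have "ln (a / a') = ln (c / c')" by simp
        then show ?thesis using pos by (simp add: ln_div)
      qed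
      also have "\<dots> = Gs \<gamma> p m \<zeta>" unfolding Gs_def c_def c'_def by simp
      finally have step: "ln a - ln a' = Gs \<gamma> p m (etaS p \<Lambda> \<sigma> \<omega> {y\<in>A. lex_le y m})"
        using m(2) unfolding \<zeta>_def by (simp add: Collect_conv_if) (metis (no_types, lifting) Collect_mem_eq Collect_cong)
      have sets: "\<And>x. x \<in> A' \<Longrightarrow> {y\<in>A'. lex_le y x} = {y\<in>A. lex_le y x}"
      proof -
        fix x assume x: "x \<in> A'"
        have "\<not> lex_le m x"
        proof
          assume "lex_le m x"
          moreover have "lex_le x m" using m x unfolding A'_def by auto
          ultimately have "m = x" by (rule lex_antisym)
          then show False using x unfolding A'_def by auto
        qed
        then show "{y\<in>A'. lex_le y x} = {y\<in>A. lex_le y x}" unfolding A'_def by auto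
      qed
      have "(\<Sum>x\<in>A. Gs \<gamma> p x (etaS p \<Lambda> \<sigma> \<omega> {y\<in>A. lex_le y x}))
          = Gs \<gamma> p m (etaS p \<Lambda> \<sigma> \<omega> {y\<in>A. lex_le y m}) + (\<Sum>x\<in>A'. Gs \<gamma> p x (etaS p \<Lambda> \<sigma> \<omega> {y\<in>A. lex_le y x}))"
        unfolding A'_def using m(1) remove(1) by (simp add: sum.remove)
      also have "(\<Sum>x\<in>A'. Gs \<gamma> p x (etaS p \<Lambda> \<sigma> \<omega> {y\<in>A. lex_le y x})) = (\<Sum>x\<in>A'. Gs \<gamma> p x (etaS p \<Lambda> \<sigma> \<omega> {y\<in>A'. lex_le y x}))"
        using sets by (intro sum.cong) auto
      finally show "ln (measure (\<gamma> \<Lambda> \<omega>) (cyl \<Lambda> (etaS p \<Lambda> \<sigma> \<omega> A))) - ln (measure (\<gamma> \<Lambda> \<omega>) (cyl \<Lambda> (etaS p \<Lambda> \<sigma> \<omega> {})))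
         = (\<Sum>x\<in>A. Gs \<gamma> p x (etaS p \<Lambda> \<sigma> \<omega> {y\<in>A. lex_le y x}))"
        using IH step unfolding a_def a'_def by linarith
    qed
  qed
  then show ?thesis using S by blast
qed

end


section \<open>Boxes\<close>

lemma Lam_mono: assumes "m \<le> n" shows "Lam m \<subseteq> Lam n"
proof
  fix x assume "x \<in> Lam m"
  then have "\<bar>x $ i\<bar> \<le> int m" for i unfolding Lam_def by auto
  moreover have "int m \<le> int n" using assms by simp
  ultimately have "\<bar>x $ i\<bar> \<le> int n" for i by (meson order_trans)
  then show "x \<in> Lam n" unfolding Lam_def by auto
qed

lemma zero_Lam[simp]: "0 \<in> Lam n" unfolding Lam_def by simp

lemma Lam_bij: "bij_betw vec_nth (Lam n :: (int^'d::finite) set) (PiE UNIV (\<lambda>_. {- int n..int n}))"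
proof (rule bij_betw_imageI)
  show "inj_on vec_nth (Lam n :: (int^'d) set)" by (meson inj_onI vec_nth_inject)
  show "vec_nth ` (Lam n :: (int^'d) set) = PiE UNIV (\<lambda>_. {- int n..int n})"
  proof (intro set_eqI iffI)
    fix f assume "f \<in> vec_nth ` (Lam n :: (int^'d) set)"
    then obtain x where x: "x \<in> Lam n" "f = vec_nth x" by blast
    then have "\<bar>x $ i\<bar> \<le> int n" for i unfolding Lam_def by auto
    then have "f i \<in> {- int n..int n}" for i using x(2) by (simp add: abs_le_iff) (meson minus_le_iff)
    then show "f \<in> PiE UNIV (\<lambda>_. {- int n..int n})" by (simp add: PiE_iff)
  next
    fix f :: "'d \<Rightarrow> int" assume f: "f \<in> PiE UNIV (\<lambda>_. {- int n..int n})"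
    have "f i \<in> {- int n..int n}" for i using f by (auto simp: PiE_iff)
    then have "\<bar>f i\<bar> \<le> int n" for i by (simp add: abs_le_iff) (meson atLeastAtMost_iff minus_le_iff)
    then have "vec_lambda f \<in> Lam n" unfolding Lam_def by simp
    moreover have "f = vec_nth (vec_lambda f)" by (rule ext) simp
    ultimately show "f \<in> vec_nth ` (Lam n :: (int^'d) set)" by blast
  qed
qed

lemma finite_Lam[simp]: "finite (Lam n :: (int^'d::finite) set)"
proof -
  have "finite (PiE (UNIV::'d set) (\<lambda>_. {- int n..int n}))" by (intro finite_PiE) auto
  then show ?thesis using Lam_bij[of n] bij_betw_finite by blast
qed

lemma card_Lam: "card (Lam n :: (int^'d::finite) set) = (2 * n + 1) ^ CARD('d)"
proof -
  have "card (Lam n :: (int^'d) set) = card (PiE (UNIV::'d set) (\<lambda>_. {- int n..int n}))"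
    using Lam_bij[of n] bij_betw_same_card by blast
  also have "\<dots> = (\<Prod>i\<in>(UNIV::'d set). card {- int n..int n})" by (simp add: card_PiE)
  also have "\<dots> = (2 * n + 1) ^ CARD('d)"
  proof -
    have "card {- int n..int n} = 2 * n + 1" by (simp add: nat_eq_iff)
    then show ?thesis by simp
  qed
  finally show ?thesis .
qed

lemma finS_Lam[simp]: "finS (Lam n :: (int^'d::finite) set)" unfolding finS_def by (metis empty_iff zero_Lam finite_Lam)

lemma Lam_add: "R \<le> n \<Longrightarrow> x \<in> Lam (n - R) \<Longrightarrow> y \<in> Lam R \<Longrightarrow> x + y \<in> Lam n"
  unfolding Lam_def by (auto simp: abs_le_iff) (smt (verit) of_nat_diff)+

lemma finite_in_Lam: "finite D \<Longrightarrow> \<exists>R. D \<subseteq> (Lam R :: (int^'d::finite) set)"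
proof (induction D rule: finite_induct)
  case empty then show ?case by simp
next
  case (insert y D)
  then obtain R where R: "D \<subseteq> Lam R" by blast
  define R' where "R' = Max (range (\<lambda>i. nat \<bar>y $ i\<bar>))"
  have "y \<in> Lam R'" unfolding Lam_def R'_def
  proof (intro CollectI allI)
    fix i
    have "nat \<bar>y $ i\<bar> \<le> Max (range (\<lambda>i. nat \<bar>y $ i\<bar>))" by (rule Max_ge) auto
    then show "\<bar>y $ i\<bar> \<le> int (Max (range (\<lambda>i. nat \<bar>y $ i\<bar>)))" by linarith
  qed
  then have "insert y D \<subseteq> Lam (max R R')" using R Lam_mono[of R "max R R'"] Lam_mono[of R' "max R R'"] by auto
  then show ?case by blast
qed

section \<open>The single-site function F\<close>

definition Fp :: "('e,'d::finite) spec \<Rightarrow> 'e \<Rightarrow> ('e,'d) config \<Rightarrow> real" where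
  "Fp \<gamma> p \<omega> = ln (measure (\<gamma> {0} \<omega>) (cyl {0} \<omega>) / measure (\<gamma> {0} \<omega>) (cyl {0} (\<lambda>_. p)))"

lemma ln_lip: fixes a u v :: real assumes "0 < a" "a \<le> u" "a \<le> v" shows "\<bar>ln u - ln v\<bar> \<le> \<bar>u - v\<bar> / a"
proof -
  have *: "ln s - ln t \<le> \<bar>s - t\<bar> / a" if "a \<le> s" "a \<le> t" for s t
  proof -
    have "ln s - ln t = ln (s / t)" using that assms by (simp add: ln_div)
    also have "\<dots> \<le> s / t - 1" using that assms by (intro ln_le_minus_one) auto
    also have "\<dots> = (s - t) / t" using that assms by (simp add: field_simps)
    also have "\<dots> \<le> \<bar>s - t\<bar> / t" using that assms by (intro divide_right_mono) auto
    also have "\<dots> \<le> \<bar>s - t\<bar> / a" using that assms by (intro divide_left_mono) auto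
    finally show ?thesis .
  qed
  show ?thesis using *[of u v] *[of v u] assms by (auto simp: abs_minus_commute)
qed

lemma tau_const[simp]: "tau x (\<lambda>_. p) = (\<lambda>_. p)" by (simp add: tau_def)

context
  fixes \<gamma> :: "('e::finite, 'd::{finite,linorder}) spec" and p :: 'e
  assumes spec: "is_specification \<gamma>" and tinv: "spec_translation_invariant \<gamma>"
begin

lemma Gs_tau: "Gs \<gamma> p x \<zeta> = Fp \<gamma> p (tau x \<zeta>)"
proof -
  have img: "(\<lambda>y. y + x) ` {0} = {x}" by simp
  have m: "measure (\<gamma> {x} \<omega>) (cyl {x} \<theta>) = measure (\<gamma> {0} (tau x \<omega>)) (cyl {0} (tau x \<theta>))" for \<omega> \<theta>
    using tinv unfolding spec_translation_invariant_def
    by (metis finS_single img tau_image_cyl0 cyl_sets_Omega finite.emptyI finite_insert)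
  show ?thesis unfolding Gs_def Fp_def m by simp
qed

definition a0 where "a0 = (SOME a. a > 0 \<and> (\<forall>\<sigma> \<eta>. a < measure (\<gamma> {0} \<eta>) (cyl {0} \<sigma>)))"

lemma a0: "a0 > 0" "a0 < measure (\<gamma> {0} \<eta>) (cyl {0} \<sigma>)"
proof -
  have "\<exists>a. a > 0 \<and> (\<forall>\<sigma> \<eta>. a < measure (\<gamma> {0} \<eta>) (cyl {0} \<sigma>))" using sp_nonnull[OF spec finS_single] by blast
  from someI_ex[OF this] show "a0 > 0" "a0 < measure (\<gamma> {0} \<eta>) (cyl {0} \<sigma>)" unfolding a0_def by auto
qed

definition C0 where "C0 = - ln a0"

lemma measure_le1: "measure (\<gamma> {0} \<eta>) A \<le> 1"
  using prob_space.prob_le_1[OF sp_prob[OF spec finS_single]] by blast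

lemma Fp_eq: "Fp \<gamma> p \<omega> = ln (measure (\<gamma> {0} \<omega>) (cyl {0} \<omega>)) - ln (measure (\<gamma> {0} \<omega>) (cyl {0} (\<lambda>_. p)))"
proof -
  have "0 < measure (\<gamma> {0} \<omega>) (cyl {0} \<omega>)" "0 < measure (\<gamma> {0} \<omega>) (cyl {0} (\<lambda>_. p))"
    using a0(1) a0(2)[of \<omega>] by (meson less_trans)+
  then show ?thesis unfolding Fp_def by (simp add: ln_div)
qed

lemma ln_meas_bound: "ln a0 \<le> ln (measure (\<gamma> {0} \<eta>) (cyl {0} \<sigma>)) \<and> ln (measure (\<gamma> {0} \<eta>) (cyl {0} \<sigma>)) \<le> 0"
  using a0(1) a0(2)[of \<eta> \<sigma>] measure_le1[of \<eta> "cyl {0} \<sigma>"] by auto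

lemma Fp_bound: "\<bar>Fp \<gamma> p \<omega>\<bar> \<le> C0"
  unfolding Fp_eq C0_def using ln_meas_bound[of \<omega> \<omega>] ln_meas_bound[of \<omega> "\<lambda>_. p"] by linarith

lemma C0_nonneg: "0 \<le> C0" using Fp_bound[of undefined] by linarith

lemma Fp_meas[measurable]: "Fp \<gamma> p \<in> borel_measurable Omega"
proof -
  have m1: "(\<lambda>\<omega>. measure (\<gamma> {0} \<omega>) (cyl {0} (\<lambda>_. e))) \<in> borel_measurable Omega" for e
    by (rule sp_meas[OF spec finS_single]) simp
  have "(\<lambda>\<omega>. (\<lambda>e \<omega>. measure (\<gamma> {0} \<omega>) (cyl {0} (\<lambda>_. e))) (\<omega> 0) \<omega>) \<in> borel_measurable Omega"
    by (rule measurable_compose_countable'[where I=UNIV, OF m1 coord_meas_Omega countable_finite[OF finite_class.finite_UNIV]])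
  moreover have "cyl {0} (\<lambda>_. \<omega> 0) = cyl {0} \<omega>" for \<omega> :: "('e,'d) config" by (auto simp: cyl_def)
  ultimately have m2: "(\<lambda>\<omega>. measure (\<gamma> {0} \<omega>) (cyl {0} \<omega>)) \<in> borel_measurable Omega" by simp
  have m3: "(\<lambda>\<omega>. measure (\<gamma> {0} \<omega>) (cyl {0} (\<lambda>_. p))) \<in> borel_measurable Omega" by (rule m1)
  show ?thesis unfolding Fp_def by (intro borel_measurable_ln borel_measurable_divide m2 m3)
qed

lemma plus_ext_meas[measurable]: "plus_ext p \<in> measurable (Omega :: ('e,'d) config measure) Omega"
proof -
  have comp: "(\<lambda>\<sigma>. plus_ext p \<sigma> x) \<in> measurable (Omega :: ('e,'d) config measure) (count_space UNIV)" for x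
  proof (cases "lex_le x 0")
    case True
    then have "(\<lambda>\<sigma>. plus_ext p \<sigma> x) = (\<lambda>\<sigma>. \<sigma> x)" by (simp add: plus_ext_def)
    then show ?thesis using coord_meas_Omega by metis
  next
    case False
    then have "(\<lambda>\<sigma>. plus_ext p \<sigma> x) = (\<lambda>\<sigma>. p)" by (simp add: plus_ext_def)
    then show ?thesis by simp
  qed
  have "(\<lambda>\<sigma> i. plus_ext p \<sigma> i) \<in> measurable (Omega :: ('e,'d) config measure) (PiM UNIV (\<lambda>_. count_space UNIV))"
    by (rule measurable_PiM_single'[OF comp]) simp
  moreover have "(Omega :: ('e,'d) config measure) = PiM UNIV (\<lambda>_. count_space UNIV)" by (simp add: Omega_def)
  ultimately show ?thesis by simp
qed

lemma cont_gamma0: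
  assumes om: "\<omega> \<in> Omega_gamma \<gamma>" and d: "\<delta> > 0"
  shows "\<exists>D. finite D \<and> (\<forall>\<omega>'. (\<forall>y\<in>D. \<omega>' y = \<omega> y) \<longrightarrow>
          \<bar>measure (\<gamma> {0} \<omega>') (cyl {0} \<theta>) - measure (\<gamma> {0} \<omega>) (cyl {0} \<theta>)\<bar> < \<delta>)"
proof -
  define A where "A = cyl {0} \<theta>"
  have AF: "A \<in> sets (F_on {0})" unfolding A_def by (rule cyl_sets_F_on) auto
  have AO: "A \<in> sets Omega" unfolding A_def by simp
  have loc: "local_fun (indicator A :: ('e,'d) config \<Rightarrow> real)"
    unfolding local_fun_def using AF by (intro exI[of _ "{0}"]) auto
  have int: "(\<integral>\<xi>. indicator A \<xi> \<partial>(\<gamma> {0} \<omega>')) = measure (\<gamma> {0} \<omega>') A" for \<omega>'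
  proof -
    have "space (\<gamma> {0} \<omega>') = UNIV" using sets_eq_imp_space_eq[OF sp_sets[OF spec finS_single]] by simp
    then show ?thesis by simp
  qed
  have lim: "limitin euclideanreal (\<lambda>\<omega>'. measure (\<gamma> {0} \<omega>') A) (measure (\<gamma> {0} \<omega>) A) (nhdsin Otop \<omega>)"
  proof -
    have "\<forall>L f. finS L \<and> local_fun f \<longrightarrow> limitin euclideanreal (\<lambda>\<omega>'. \<integral>\<xi>. f \<xi> \<partial>(\<gamma> L \<omega>'))
        (\<integral>\<xi>. f \<xi> \<partial>(\<gamma> L \<omega>)) (nhdsin Otop \<omega>)" using om unfolding Omega_gamma_def by blast
    then have "limitin euclideanreal (\<lambda>\<omega>'. \<integral>\<xi>. indicator A \<xi> \<partial>(\<gamma> {0} \<omega>'))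
        (\<integral>\<xi>. indicator A \<xi> \<partial>(\<gamma> {0} \<omega>)) (nhdsin Otop \<omega>)" using loc finS_single by blast
    then show ?thesis unfolding int .
  qed
  have "openin euclideanreal (ball (measure (\<gamma> {0} \<omega>) A) \<delta>)" by simp
  moreover have "measure (\<gamma> {0} \<omega>) A \<in> ball (measure (\<gamma> {0} \<omega>) A) \<delta>" using d by simp
  ultimately have "eventually (\<lambda>\<omega>'. measure (\<gamma> {0} \<omega>') A \<in> ball (measure (\<gamma> {0} \<omega>) A) \<delta>) (nhdsin Otop \<omega>)"
    using lim unfolding limitin_def by blast
  then obtain S where S: "openin Otop S" "\<omega> \<in> S" "\<forall>\<omega>'\<in>S. measure (\<gamma> {0} \<omega>') A \<in> ball (measure (\<gamma> {0} \<omega>) A) \<delta>"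
    unfolding eventually_nhdsin by (auto simp: Otop_def)
  then obtain U where U: "finite {i \<in> UNIV. U i \<noteq> topspace (discrete_topology UNIV)}" "\<omega> \<in> PiE UNIV U" "PiE UNIV U \<subseteq> S"
    unfolding Otop_def openin_product_topology_alt by blast
  define D where "D = {i. U i \<noteq> UNIV}"
  have "finite D" using U(1) unfolding D_def by simp
  moreover have "\<bar>measure (\<gamma> {0} \<omega>') A - measure (\<gamma> {0} \<omega>) A\<bar> < \<delta>" if ag: "\<forall>y\<in>D. \<omega>' y = \<omega> y" for \<omega>'
  proof -
    have "\<omega>' \<in> PiE UNIV U"
    proof (unfold PiE_iff, intro conjI ballI)
      fix i show "\<omega>' i \<in> U i"
        using ag U(2) unfolding D_def PiE_iff by (cases "U i = UNIV") auto
    qed simp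
    then have "\<omega>' \<in> S" using U(3) by blast
    then show ?thesis using S(3) by (auto simp: dist_real_def abs_minus_commute)
  qed
  ultimately show ?thesis unfolding A_def by blast
qed

lemma Fp_cont:
  assumes om: "\<omega> \<in> Omega_gamma \<gamma>" and e: "\<epsilon> > 0"
  shows "\<exists>R. \<forall>\<omega>'. (\<forall>y\<in>Lam R. \<omega>' y = \<omega> y) \<longrightarrow> \<bar>Fp \<gamma> p \<omega>' - Fp \<gamma> p \<omega>\<bar> \<le> \<epsilon>"
proof -
  define \<delta> where "\<delta> = \<epsilon> * a0 / 2"
  have d: "\<delta> > 0" unfolding \<delta>_def using e a0(1) by simp
  obtain D1 where D1: "finite D1" "\<forall>\<omega>'. (\<forall>y\<in>D1. \<omega>' y = \<omega> y) \<longrightarrow>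
          \<bar>measure (\<gamma> {0} \<omega>') (cyl {0} \<omega>) - measure (\<gamma> {0} \<omega>) (cyl {0} \<omega>)\<bar> < \<delta>"
    using cont_gamma0[OF om d] by blast
  obtain D2 where D2: "finite D2" "\<forall>\<omega>'. (\<forall>y\<in>D2. \<omega>' y = \<omega> y) \<longrightarrow>
          \<bar>measure (\<gamma> {0} \<omega>') (cyl {0} (\<lambda>_. p)) - measure (\<gamma> {0} \<omega>) (cyl {0} (\<lambda>_. p))\<bar> < \<delta>"
    using cont_gamma0[OF om d] by blast
  obtain R where R: "D1 \<union> D2 \<subseteq> Lam R" using finite_in_Lam[of "D1 \<union> D2"] D1(1) D2(1) by blast
  have "\<bar>Fp \<gamma> p \<omega>' - Fp \<gamma> p \<omega>\<bar> \<le> \<epsilon>" if ag: "\<forall>y\<in>Lam R. \<omega>' y = \<omega> y" for \<omega>'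
  proof -
    have c: "cyl {0} \<omega>' = cyl {0} \<omega>" using ag zero_Lam[of R] by (auto simp: cyl_def)
    define u where "u = measure (\<gamma> {0} \<omega>) (cyl {0} \<omega>)"
    define u' where "u' = measure (\<gamma> {0} \<omega>') (cyl {0} \<omega>)"
    define v where "v = measure (\<gamma> {0} \<omega>) (cyl {0} (\<lambda>_. p))"
    define v' where "v' = measure (\<gamma> {0} \<omega>') (cyl {0} (\<lambda>_. p))"
    have du: "\<bar>u' - u\<bar> < \<delta>" using D1(2) ag R unfolding u_def u'_def by blast
    have dv: "\<bar>v' - v\<bar> < \<delta>" using D2(2) ag R unfolding v_def v'_def by blast
    have lu: "\<bar>ln u' - ln u\<bar> \<le> \<bar>u' - u\<bar> / a0"
      unfolding u_def u'_def using a0 by (intro ln_lip) (auto intro: less_imp_le)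
    have lv: "\<bar>ln v' - ln v\<bar> \<le> \<bar>v' - v\<bar> / a0"
      unfolding v_def v'_def using a0 by (intro ln_lip) (auto intro: less_imp_le)
    have "\<bar>Fp \<gamma> p \<omega>' - Fp \<gamma> p \<omega>\<bar> = \<bar>(ln u' - ln u) - (ln v' - ln v)\<bar>"
      unfolding Fp_eq c u_def u'_def v_def v'_def by simp
    also have "\<dots> \<le> \<bar>u' - u\<bar> / a0 + \<bar>v' - v\<bar> / a0" using lu lv by linarith
    also have "\<dots> \<le> \<delta> / a0 + \<delta> / a0" using du dv a0(1) by (intro add_mono divide_right_mono) auto
    also have "\<dots> = \<epsilon>" unfolding \<delta>_def using a0(1) by simp
    finally show ?thesis .
  qed
  then show ?thesis by blast
qed

definition Phi where "Phi R \<theta> c = (SUP \<omega>'\<in>cyl (Lam R) \<theta>. \<bar>Fp \<gamma> p \<omega>' - c\<bar>)"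

lemma Phi_bdd: "bdd_above ((\<lambda>\<omega>'. \<bar>Fp \<gamma> p \<omega>' - c\<bar>) ` B)"
proof (rule bdd_aboveI2)
  fix \<omega>' show "\<bar>Fp \<gamma> p \<omega>' - c\<bar> \<le> C0 + \<bar>c\<bar>" using Fp_bound[of \<omega>'] by linarith
qed

lemma Phi_upper: "\<omega>' \<in> cyl (Lam R) \<theta> \<Longrightarrow> \<bar>Fp \<gamma> p \<omega>' - c\<bar> \<le> Phi R \<theta> c"
  unfolding Phi_def by (rule cSUP_upper[OF _ Phi_bdd])

lemma self_cyl: "\<theta> \<in> cyl L \<theta>" by (simp add: cyl_def)

lemma Phi_least: "(\<And>\<omega>'. \<omega>' \<in> cyl (Lam R) \<theta> \<Longrightarrow> \<bar>Fp \<gamma> p \<omega>' - c\<bar> \<le> b) \<Longrightarrow> Phi R \<theta> c \<le> b"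
  unfolding Phi_def by (rule cSUP_least) (auto simp: cyl_def)

lemma Phi_nonneg: "0 \<le> Phi R \<theta> c"
  using Phi_upper[OF self_cyl] by (meson abs_ge_zero order_trans)

lemma Phi_lip: "\<bar>Phi R \<theta> c - Phi R \<theta> c'\<bar> \<le> \<bar>c - c'\<bar>"
proof -
  have "Phi R \<theta> c \<le> Phi R \<theta> c' + \<bar>c - c'\<bar>" for c c'
  proof (rule Phi_least)
    fix \<omega>' assume "\<omega>' \<in> cyl (Lam R) \<theta>"
    then have "\<bar>Fp \<gamma> p \<omega>' - c'\<bar> \<le> Phi R \<theta> c'" by (rule Phi_upper)
    then show "\<bar>Fp \<gamma> p \<omega>' - c\<bar> \<le> Phi R \<theta> c' + \<bar>c - c'\<bar>" by linarith
  qed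
  from this[of c c'] this[of c' c] show ?thesis by (auto simp: abs_minus_commute)
qed

lemma Phi_cont: "continuous_on UNIV (Phi R \<theta>)"
proof (rule lipschitz_on_continuous_on)
  show "1-lipschitz_on UNIV (Phi R \<theta>)"
    by (rule lipschitz_onI) (auto simp: dist_real_def intro: Phi_lip)
qed

lemma Phi_restrict: "Phi R (restrict \<theta> (Lam R)) c = Phi R \<theta> c"
proof -
  have "cyl (Lam R) (restrict \<theta> (Lam R)) = cyl (Lam R) \<theta>" by (auto simp: cyl_def)
  then show ?thesis unfolding Phi_def by simp
qed

definition ER where "ER R \<sigma> = Phi R (plus_ext p \<sigma>) (Fp \<gamma> p (plus_ext p \<sigma>))"

lemma ER_nonneg: "0 \<le> ER R \<sigma>" unfolding ER_def by (rule Phi_nonneg)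

lemma ER_le: "ER R \<sigma> \<le> 2 * C0"
  unfolding ER_def
proof (rule Phi_least)
  fix \<omega>' show "\<bar>Fp \<gamma> p \<omega>' - Fp \<gamma> p (plus_ext p \<sigma>)\<bar> \<le> 2 * C0"
    using Fp_bound[of \<omega>'] Fp_bound[of "plus_ext p \<sigma>"] by linarith
qed

lemma ER_upper: "\<omega>' \<in> cyl (Lam R) (plus_ext p \<sigma>) \<Longrightarrow> \<bar>Fp \<gamma> p \<omega>' - Fp \<gamma> p (plus_ext p \<sigma>)\<bar> \<le> ER R \<sigma>"
  unfolding ER_def by (rule Phi_upper)

lemma ER_meas[measurable]: "ER R \<in> borel_measurable Omega"
proof -
  define I where "I = (\<lambda>\<sigma>. restrict \<sigma> (Lam R)) ` (UNIV :: ('e,'d) config set)"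
  have cI: "countable I" unfolding I_def by (intro countable_finite finite_restrictions) simp
  have g0: "(\<lambda>\<theta>. restrict \<theta> (Lam R)) \<in> measurable (Omega :: ('e,'d) config measure) (count_space I)"
    by (rule local_meas[of "Lam R"]) (auto simp: I_def restrict_def)
  have g: "(\<lambda>\<sigma>. restrict (plus_ext p \<sigma>) (Lam R)) \<in> measurable (Omega :: ('e,'d) config measure) (count_space I)"
    using measurable_comp[OF plus_ext_meas g0] by (simp add: comp_def)
  have f: "(\<lambda>\<sigma>. Phi R i (Fp \<gamma> p (plus_ext p \<sigma>))) \<in> borel_measurable Omega" for i
    by (rule borel_measurable_continuous_on[OF Phi_cont]) measurable
  have "(\<lambda>\<sigma>. (\<lambda>i \<sigma>. Phi R i (Fp \<gamma> p (plus_ext p \<sigma>))) (restrict (plus_ext p \<sigma>) (Lam R)) \<sigma>) \<in> borel_measurable Omega"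
    by (rule measurable_compose_countable'[OF f g cI])
  then show ?thesis unfolding ER_def Phi_restrict by simp
qed

lemma ER_lim: assumes "plus_ext p \<sigma> \<in> Omega_gamma \<gamma>" shows "(\<lambda>R. ER R \<sigma>) \<longlonglongrightarrow> 0"
proof (rule LIMSEQ_I)
  fix r :: real assume r: "r > 0"
  obtain R0 where R0: "\<forall>\<omega>'. (\<forall>y\<in>Lam R0. \<omega>' y = plus_ext p \<sigma> y) \<longrightarrow> \<bar>Fp \<gamma> p \<omega>' - Fp \<gamma> p (plus_ext p \<sigma>)\<bar> \<le> r / 2"
    using Fp_cont[OF assms, of "r/2"] r by auto
  have "norm (ER R \<sigma> - 0) < r" if "R \<ge> R0" for R
  proof -
    have "ER R \<sigma> \<le> r / 2" unfolding ER_def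
    proof (rule Phi_least)
      fix \<omega>' assume "\<omega>' \<in> cyl (Lam R) (plus_ext p \<sigma>)"
      then have "\<forall>y\<in>Lam R0. \<omega>' y = plus_ext p \<sigma> y" using Lam_mono[OF that] by (auto simp: cyl_def)
      then show "\<bar>Fp \<gamma> p \<omega>' - Fp \<gamma> p (plus_ext p \<sigma>)\<bar> \<le> r / 2" using R0 by blast
    qed
    then show ?thesis using ER_nonneg[of R \<sigma>] r by simp
  qed
  then show "\<exists>no. \<forall>n\<ge>no. norm (ER n \<sigma> - 0) < r" by blast
qed

end


context
  fixes \<gamma> :: "('e::finite, 'd::{finite,linorder}) spec" and p :: 'e
  assumes spec: "is_specification \<gamma>" and tinv: "spec_translation_invariant \<gamma>"
begin

lemma cyl_etaS_full: "cyl \<Lambda> (etaS p \<Lambda> \<sigma> \<omega> \<Lambda>) = cyl \<Lambda> \<sigma>"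
  by (auto simp: cyl_def etaS_def)

lemma cyl_etaS_empty: "cyl \<Lambda> (etaS p \<Lambda> \<sigma> \<omega> {}) = cyl \<Lambda> (\<lambda>_. p)"
  by (auto simp: cyl_def etaS_def)

lemma tau_etaS_cyl:
  fixes x :: "int^'d::{finite,linorder}"
  assumes R: "R \<le> n" and x: "x \<in> Lam (n - R)"
  shows "tau x (etaS p (Lam n) \<sigma> \<omega> {y\<in>Lam n. lex_le y x}) \<in> cyl (Lam R) (plus_ext p (tau x \<sigma>))"
  unfolding cyl_def
proof (intro CollectI ballI)
  fix y :: "int^'d::{finite,linorder}" assume y: "y \<in> Lam R"
  have xy: "x + y \<in> Lam n" by (rule Lam_add[OF R x y])
  show "tau x (etaS p (Lam n) \<sigma> \<omega> {y\<in>Lam n. lex_le y x}) y = plus_ext p (tau x \<sigma>) y"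
    using xy lex_shift0[of x y] by (simp add: tau_def etaS_def plus_ext_def)
qed

lemma pw_bound:
  assumes R: "R \<le> n"
  shows "\<bar>ln (measure (\<gamma> (Lam n) \<omega>) (cyl (Lam n) \<sigma>)) - ln (measure (\<gamma> (Lam n) \<omega>) (cyl (Lam n) (\<lambda>_. p)))
           - (\<Sum>x\<in>Lam n. Fp \<gamma> p (plus_ext p (tau x \<sigma>)))\<bar>
         \<le> (\<Sum>x\<in>Lam (n - R). ER \<gamma> p R (tau x \<sigma>)) + 2 * C0 \<gamma> * (real (card (Lam n :: (int^'d::{finite,linorder}) set)) - real (card (Lam (n - R) :: (int^'d::{finite,linorder}) set)))"
proof -
  define \<Lambda> where "\<Lambda> = (Lam n :: (int^'d::{finite,linorder}) set)"
  define K where "K = (Lam (n - R) :: (int^'d::{finite,linorder}) set)"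
  have KL: "K \<subseteq> \<Lambda>" unfolding K_def \<Lambda>_def by (rule Lam_mono) simp
  have fin: "finite \<Lambda>" "finite K" unfolding K_def \<Lambda>_def by simp_all
  define \<zeta> where "\<zeta> x = etaS p \<Lambda> \<sigma> \<omega> {y\<in>\<Lambda>. lex_le y x}" for x
  define d where "d x = Fp \<gamma> p (tau x (\<zeta> x)) - Fp \<gamma> p (plus_ext p (tau x \<sigma>))" for x
  have tel: "ln (measure (\<gamma> \<Lambda> \<omega>) (cyl \<Lambda> \<sigma>)) - ln (measure (\<gamma> \<Lambda> \<omega>) (cyl \<Lambda> (\<lambda>_. p)))
      = (\<Sum>x\<in>\<Lambda>. Fp \<gamma> p (tau x (\<zeta> x)))"
    using telescope[OF spec finS_Lam subset_refl, of n \<omega> p \<sigma>]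
    unfolding cyl_etaS_full cyl_etaS_empty Gs_tau[OF spec tinv] \<zeta>_def \<Lambda>_def .
  have d1: "\<bar>d x\<bar> \<le> 2 * C0 \<gamma>" for x
    unfolding d_def using Fp_bound[OF spec tinv, of p "tau x (\<zeta> x)"] Fp_bound[OF spec tinv, of p "plus_ext p (tau x \<sigma>)"] by linarith
  have d2: "\<bar>d x\<bar> \<le> ER \<gamma> p R (tau x \<sigma>)" if "x \<in> K" for x
    unfolding d_def \<zeta>_def \<Lambda>_def
    by (rule ER_upper[OF spec tinv]) (rule tau_etaS_cyl[OF R that[unfolded K_def]])
  have "\<bar>(\<Sum>x\<in>\<Lambda>. Fp \<gamma> p (tau x (\<zeta> x))) - (\<Sum>x\<in>\<Lambda>. Fp \<gamma> p (plus_ext p (tau x \<sigma>)))\<bar> = \<bar>\<Sum>x\<in>\<Lambda>. d x\<bar>"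
    unfolding d_def by (simp add: sum_subtractf)
  also have "\<dots> \<le> (\<Sum>x\<in>\<Lambda>. \<bar>d x\<bar>)" by (rule sum_abs)
  also have "\<dots> = (\<Sum>x\<in>K. \<bar>d x\<bar>) + (\<Sum>x\<in>\<Lambda> - K. \<bar>d x\<bar>)"
    using sum.subset_diff[OF KL fin(1), of "\<lambda>x. \<bar>d x\<bar>"] by simp
  also have "\<dots> \<le> (\<Sum>x\<in>K. ER \<gamma> p R (tau x \<sigma>)) + (\<Sum>x\<in>\<Lambda> - K. 2 * C0 \<gamma>)"
    by (intro add_mono sum_mono d1 d2)
  also have "(\<Sum>x\<in>\<Lambda> - K. 2 * C0 \<gamma>) = 2 * C0 \<gamma> * (real (card \<Lambda>) - real (card K))"
    using card_Diff_subset[OF fin(2) KL] card_mono[OF fin(1) KL] by (simp add: of_nat_diff)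
  finally show ?thesis using tel unfolding \<Lambda>_def K_def by simp
qed

end


lemma exp_bound_of_ln:
  fixes a b c :: real
  assumes "0 < a" "0 < b" "ln a - ln b \<le> c" shows "a \<le> exp c * b"
proof -
  have "a = exp (ln a)" using assms by simp
  also have "\<dots> \<le> exp (c + ln b)"
  proof -
    have "ln a \<le> c + ln b" using assms by linarith
    then show ?thesis by (simp only: exp_le_cancel_iff)
  qed
  also have "\<dots> = exp c * b" using assms by (simp add: exp_add)
  finally show ?thesis .
qed

lemma exp_lbound_of_ln:
  fixes a b c :: real
  assumes "0 < a" "0 < b" "c \<le> ln a - ln b" shows "exp c * b \<le> a"
proof -
  have "exp c * b = exp (c + ln b)" using assms by (simp add: exp_add)
  also have "\<dots> \<le> exp (ln a)"
  proof -
    have "c + ln b \<le> ln a" using assms by linarith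
    then show ?thesis by (simp only: exp_le_cancel_iff)
  qed
  also have "\<dots> = a" using assms by simp
  finally show ?thesis .
qed

context
  fixes \<gamma> :: "('e::finite, 'd::{finite,linorder}) spec" and p :: 'e
  assumes spec: "is_specification \<gamma>" and tinv: "spec_translation_invariant \<gamma>"
begin

lemma gibbs_int:
  assumes nu: "\<nu> \<in> Gibbs \<gamma>" and L: "finS L" and A: "A \<in> sets Omega"
  shows "measure \<nu> A = (\<integral>\<omega>. measure (\<gamma> L \<omega>) A \<partial>\<nu>)"
proof -
  have P: "prob_space \<nu>" and S: "sets \<nu> = sets Omega"
    and ae: "AE \<omega> in \<nu>. real_cond_exp \<nu> (F_on (- L)) (indicator A) \<omega> = measure (\<gamma> L \<omega>) A"
    using nu L A unfolding Gibbs_def by auto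
  have sp: "space \<nu> = UNIV" using sets_eq_imp_space_eq[OF S] by simp
  have sub: "subalgebra \<nu> (F_on (- L))"
    unfolding subalgebra_def using sets_F_on_sub S sp by auto
  have fms: "finite_measure_subalgebra \<nu> (F_on (- L))"
    unfolding finite_measure_subalgebra_def finite_measure_subalgebra_axioms_def
    using prob_space.axioms(1)[OF P] sub by blast
  interpret finite_measure_subalgebra \<nu> "F_on (- L)" by (rule fms)
  have AS: "A \<in> sets \<nu>" using A S by simp
  have int: "integrable \<nu> (indicator A :: _ \<Rightarrow> real)"
    by (rule integrable_real_indicator[OF AS]) (simp add: less_top[symmetric])
  have "measure \<nu> A = (\<integral>\<omega>. indicator A \<omega> \<partial>\<nu>)" using sp by simp
  also have "\<dots> = (\<integral>\<omega>. real_cond_exp \<nu> (F_on (- L)) (indicator A) \<omega> \<partial>\<nu>)"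
    using real_cond_exp_int(2)[OF int] by simp
  also have "\<dots> = (\<integral>\<omega>. measure (\<gamma> L \<omega>) A \<partial>\<nu>)"
  proof (rule integral_cong_AE)
    show "(\<lambda>\<omega>. measure (\<gamma> L \<omega>) A) \<in> borel_measurable \<nu>"
      using sp_meas[OF spec L A] measurable_cong_sets[OF S refl] by blast
  qed (use ae in auto)
  finally show ?thesis .
qed

end


lemma cyl_dep: "(\<And>x. x \<in> L \<Longrightarrow> \<sigma> x = \<sigma>' x) \<Longrightarrow> cyl L \<sigma> = cyl L \<sigma>'"
  by (auto simp: cyl_def)

lemma ratio_lim: "(\<lambda>n. real (card (Lam (n - R) :: (int^'d::finite) set)) / real (card (Lam n :: (int^'d) set))) \<longlonglongrightarrow> 1"
proof -
  define h where "h n = real (2 * (n - R) + 1) / real (2 * n + 1)" for n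
  have eq: "real (card (Lam (n - R) :: (int^'d::finite) set)) / real (card (Lam n :: (int^'d) set)) = h n ^ CARD('d)" for n
    unfolding card_Lam h_def by (simp add: power_divide)
  have g0: "(\<lambda>n. real R / real n) \<longlonglongrightarrow> 0" by (rule lim_const_over_n)
  have lim0: "(\<lambda>n. 1 - h n) \<longlonglongrightarrow> 0"
  proof (rule tendsto_sandwich[OF _ _ tendsto_const g0])
    show "\<forall>\<^sub>F n in sequentially. 0 \<le> 1 - h n"
      by (rule always_eventually) (auto simp: h_def field_simps)
    show "\<forall>\<^sub>F n in sequentially. 1 - h n \<le> real R / real n"
    proof (rule eventually_sequentiallyI[of "Suc R"])
      fix n assume n: "Suc R \<le> n"
      then have "h n = (2 * real n - 2 * real R + 1) / (2 * real n + 1)" unfolding h_def by (simp add: of_nat_diff add_ac)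
      then have "1 - h n = 2 * real R / (2 * real n + 1)" by (simp add: field_simps)
      also have "\<dots> \<le> 2 * real R / (2 * real n)" using n by (intro divide_left_mono) auto
      also have "\<dots> = real R / real n" using n by simp
      finally show "1 - h n \<le> real R / real n" .
    qed
  qed
  then have "h \<longlonglongrightarrow> 1"
    using tendsto_diff[OF tendsto_const[of 1] lim0] by simp
  then have "(\<lambda>n. h n ^ CARD('d)) \<longlonglongrightarrow> 1 ^ CARD('d)" by (rule tendsto_power)
  then show ?thesis unfolding eq by simp
qed

context
  fixes \<gamma> :: "('e::finite, 'd::{finite,linorder}) spec" and p :: 'e and \<mu> :: "('e,'d) config measure"
  assumes spec: "is_specification \<gamma>" and tinv: "spec_translation_invariant \<gamma>"
    and mu: "inv_prob \<mu>" and ae: "AE \<sigma> in \<mu>. plus_ext p \<sigma> \<in> Omega_gamma \<gamma>"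
begin

lemma mu_prob: "prob_space \<mu>" and mu_sets: "sets \<mu> = sets Omega" and mu_inv: "distr \<mu> Omega (tau x) = \<mu>"
  using mu unfolding inv_prob_def by auto

lemma meas_mu: "f \<in> borel_measurable Omega \<Longrightarrow> f \<in> borel_measurable \<mu>"
  using measurable_cong_sets[OF mu_sets refl] by blast

lemma int_bdd: "f \<in> borel_measurable Omega \<Longrightarrow> (\<And>\<sigma>. \<bar>f \<sigma>\<bar> \<le> B) \<Longrightarrow> integrable \<mu> (f :: _ \<Rightarrow> real)"
  by (rule finite_measure.integrable_const_bound[OF prob_space.axioms(1)[OF mu_prob], of f B])
     (auto intro: meas_mu)

lemma shift_int: assumes "f \<in> borel_measurable Omega"
  shows "(\<integral>\<sigma>. f (tau x \<sigma>) \<partial>\<mu>) = (\<integral>\<sigma>. (f \<sigma> :: real) \<partial>\<mu>)"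
proof -
  have "tau x \<in> measurable \<mu> Omega" using measurable_cong_sets[OF mu_sets refl] tau_meas by blast
  from integral_distr[OF this assms] show ?thesis unfolding mu_inv by simp
qed

definition Fpp where "Fpp \<sigma> = Fp \<gamma> p (plus_ext p \<sigma>)"

lemma Fpp_meas[measurable]: "Fpp \<in> borel_measurable Omega"
  unfolding Fpp_def using measurable_comp[OF plus_ext_meas[OF spec tinv] Fp_meas[OF spec tinv]]
  by (simp add: comp_def)

lemma Fpp_bound: "\<bar>Fpp \<sigma>\<bar> \<le> C0 \<gamma>" unfolding Fpp_def by (rule Fp_bound[OF spec tinv])

lemma rhs_eq: "rhs p \<gamma> \<mu> = (\<integral>\<sigma>. Fpp \<sigma> \<partial>\<mu>)"
  unfolding rhs_def Fpp_def Fp_def ..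

lemma comp_tau_meas: "f \<in> borel_measurable Omega \<Longrightarrow> (\<lambda>\<sigma>. f (tau x \<sigma>)) \<in> borel_measurable Omega"
  using measurable_comp[OF tau_meas] by (simp add: comp_def)

lemma main_est:
  fixes Q :: "('e,'d::{finite,linorder}) config \<Rightarrow> real"
  assumes Qm: "Q \<in> borel_measurable Omega" and Rn: "R \<le> n"
    and bnd: "\<And>\<sigma>. \<bar>Q \<sigma> - (\<Sum>x\<in>Lam n. Fpp (tau x \<sigma>))\<bar>
         \<le> (\<Sum>x\<in>Lam (n - R). ER \<gamma> p R (tau x \<sigma>)) + 2 * C0 \<gamma> * (real (card (Lam n :: (int^'d::{finite,linorder}) set)) - real (card (Lam (n - R) :: (int^'d::{finite,linorder}) set)))"
  shows "\<bar>(1 / real (card (Lam n :: (int^'d::{finite,linorder}) set))) * (\<integral>\<sigma>. Q \<sigma> \<partial>\<mu>) - rhs p \<gamma> \<mu>\<bar>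
      \<le> (\<integral>\<sigma>. ER \<gamma> p R \<sigma> \<partial>\<mu>) + 2 * C0 \<gamma> * (1 - real (card (Lam (n - R) :: (int^'d::{finite,linorder}) set)) / real (card (Lam n :: (int^'d::{finite,linorder}) set)))"
proof -
  define \<Lambda> where "\<Lambda> = (Lam n :: (int^'d::{finite,linorder}) set)"
  define K where "K = (Lam (n - R) :: (int^'d::{finite,linorder}) set)"
  define c where "c = 2 * C0 \<gamma> * (real (card \<Lambda>) - real (card K))"
  define A where "A \<sigma> = (\<Sum>x\<in>\<Lambda>. Fpp (tau x \<sigma>))" for \<sigma>
  define B where "B \<sigma> = (\<Sum>x\<in>K. ER \<gamma> p R (tau x \<sigma>)) + c" for \<sigma>
  have KL: "K \<subseteq> \<Lambda>" unfolding K_def \<Lambda>_def by (rule Lam_mono) simp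
  have finL: "finite \<Lambda>" unfolding \<Lambda>_def by (rule finite_Lam)
  have cardK: "real (card K) \<le> real (card \<Lambda>)" using card_mono[OF finL KL] by (rule of_nat_mono)
  have cardpos: "real (card \<Lambda>) > 0" unfolding \<Lambda>_def card_Lam by simp
  have C0: "0 \<le> C0 \<gamma>" by (rule C0_nonneg[OF spec tinv])
  have c0: "0 \<le> c" unfolding c_def using C0 cardK by simp
  have ERi: "integrable \<mu> (ER \<gamma> p R)"
    by (rule int_bdd[of _ "2 * C0 \<gamma>"]) (use ER_nonneg[OF spec tinv] ER_le[OF spec tinv] ER_meas[OF spec tinv] in auto)
  have ERti: "integrable \<mu> (\<lambda>\<sigma>. ER \<gamma> p R (tau x \<sigma>))" for x
    by (rule int_bdd[of _ "2 * C0 \<gamma>"]) (use ER_nonneg[OF spec tinv] ER_le[OF spec tinv] ER_meas[OF spec tinv] in \<open>auto intro: comp_tau_meas\<close>)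
  have Fti: "integrable \<mu> (\<lambda>\<sigma>. Fpp (tau x \<sigma>))" for x
    by (rule int_bdd[of _ "C0 \<gamma>"]) (auto intro: comp_tau_meas Fpp_bound)
  have Ai: "integrable \<mu> A" unfolding A_def by (rule Bochner_Integration.integrable_sum[where f="\<lambda>x \<sigma>. Fpp (tau x \<sigma>)"]) (rule Fti)
  have Bi: "integrable \<mu> B" unfolding B_def
    by (intro Bochner_Integration.integrable_add Bochner_Integration.integrable_sum ERti) (simp add: finite_measure.integrable_const[OF prob_space.axioms(1)[OF mu_prob]])
  have intA: "(\<integral>\<sigma>. A \<sigma> \<partial>\<mu>) = real (card \<Lambda>) * rhs p \<gamma> \<mu>"
  proof -
    have "(\<integral>\<sigma>. A \<sigma> \<partial>\<mu>) = (\<Sum>x\<in>\<Lambda>. (\<integral>\<sigma>. Fpp (tau x \<sigma>) \<partial>\<mu>))"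
      unfolding A_def by (rule Bochner_Integration.integral_sum) (rule Fti)
    also have "\<dots> = (\<Sum>x\<in>\<Lambda>. (\<integral>\<sigma>. Fpp \<sigma> \<partial>\<mu>))"
      by (rule sum.cong[OF refl]) (rule shift_int[OF Fpp_meas])
    finally show ?thesis unfolding rhs_eq by simp
  qed
  have const: "(\<integral>\<sigma>. c \<partial>\<mu>) = c" using prob_space.prob_space[OF mu_prob] by simp
  have intB: "(\<integral>\<sigma>. B \<sigma> \<partial>\<mu>) = real (card K) * (\<integral>\<sigma>. ER \<gamma> p R \<sigma> \<partial>\<mu>) + c"
  proof -
    have "(\<integral>\<sigma>. B \<sigma> \<partial>\<mu>) = (\<integral>\<sigma>. (\<Sum>x\<in>K. ER \<gamma> p R (tau x \<sigma>)) \<partial>\<mu>) + (\<integral>\<sigma>. c \<partial>\<mu>)"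
      unfolding B_def by (rule Bochner_Integration.integral_add) (auto intro!: Bochner_Integration.integrable_sum ERti simp: finite_measure.integrable_const[OF prob_space.axioms(1)[OF mu_prob]])
    also have "(\<integral>\<sigma>. (\<Sum>x\<in>K. ER \<gamma> p R (tau x \<sigma>)) \<partial>\<mu>) = (\<Sum>x\<in>K. (\<integral>\<sigma>. ER \<gamma> p R (tau x \<sigma>) \<partial>\<mu>))"
      by (rule Bochner_Integration.integral_sum) (rule ERti)
    also have "\<dots> = real (card K) * (\<integral>\<sigma>. ER \<gamma> p R \<sigma> \<partial>\<mu>)"
      using shift_int[OF ER_meas[OF spec tinv]] by simp
    finally show ?thesis using const by simp
  qed
  have bnd': "\<bar>Q \<sigma> - A \<sigma>\<bar> \<le> B \<sigma>" for \<sigma> using bnd[of \<sigma>] unfolding A_def B_def c_def \<Lambda>_def K_def .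
  have QAi: "integrable \<mu> (\<lambda>\<sigma>. Q \<sigma> - A \<sigma>)"
  proof (rule Bochner_Integration.integrable_bound[OF Bi])
    show "(\<lambda>\<sigma>. Q \<sigma> - A \<sigma>) \<in> borel_measurable \<mu>"
      by (rule borel_measurable_diff[OF meas_mu[OF Qm] borel_measurable_integrable[OF Ai]])
    show "AE \<sigma> in \<mu>. norm (Q \<sigma> - A \<sigma>) \<le> norm (B \<sigma>)"
    proof (rule AE_I2)
      fix \<sigma> have "\<bar>Q \<sigma> - A \<sigma>\<bar> \<le> \<bar>B \<sigma>\<bar>" using bnd'[of \<sigma>] abs_ge_self[of "B \<sigma>"] by linarith
      then show "norm (Q \<sigma> - A \<sigma>) \<le> norm (B \<sigma>)" by simp
    qed
  qed
  have Qi: "integrable \<mu> Q"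
  proof -
    have "integrable \<mu> (\<lambda>\<sigma>. (Q \<sigma> - A \<sigma>) + A \<sigma>)" by (rule Bochner_Integration.integrable_add[OF QAi Ai])
    then show ?thesis by simp
  qed
  have "\<bar>(\<integral>\<sigma>. Q \<sigma> - A \<sigma> \<partial>\<mu>)\<bar> \<le> (\<integral>\<sigma>. B \<sigma> \<partial>\<mu>)"
  proof -
    have "\<bar>(\<integral>\<sigma>. Q \<sigma> - A \<sigma> \<partial>\<mu>)\<bar> \<le> (\<integral>\<sigma>. \<bar>Q \<sigma> - A \<sigma>\<bar> \<partial>\<mu>)"
      using Bochner_Integration.integral_norm_bound[of \<mu> "\<lambda>\<sigma>. Q \<sigma> - A \<sigma>"] by simp
    also have "\<dots> \<le> (\<integral>\<sigma>. B \<sigma> \<partial>\<mu>)"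
      by (rule Bochner_Integration.integral_mono[OF Bochner_Integration.integrable_abs[OF QAi] Bi]) (rule bnd')
    finally show ?thesis .
  qed
  moreover have "(\<integral>\<sigma>. Q \<sigma> - A \<sigma> \<partial>\<mu>) = (\<integral>\<sigma>. Q \<sigma> \<partial>\<mu>) - (\<integral>\<sigma>. A \<sigma> \<partial>\<mu>)"
    by (rule Bochner_Integration.integral_diff[OF Qi Ai])
  ultimately have main: "\<bar>(\<integral>\<sigma>. Q \<sigma> \<partial>\<mu>) - real (card \<Lambda>) * rhs p \<gamma> \<mu>\<bar> \<le> real (card K) * (\<integral>\<sigma>. ER \<gamma> p R \<sigma> \<partial>\<mu>) + c"
    using intA intB by simp
  define N where "N = real (card \<Lambda>)"
  define I where "I = (\<integral>\<sigma>. ER \<gamma> p R \<sigma> \<partial>\<mu>)"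
  define IQ where "IQ = (\<integral>\<sigma>. Q \<sigma> \<partial>\<mu>)"
  define r where "r = rhs p \<gamma> \<mu>"
  define k where "k = real (card K)"
  define C where "C = C0 \<gamma>"
  have Npos: "N > 0" unfolding N_def by (rule cardpos)
  have kN: "k \<le> N" unfolding k_def N_def by (rule cardK)
  have I0: "0 \<le> I" unfolding I_def by (rule integral_nonneg_AE) (simp add: ER_nonneg[OF spec tinv])
  have main': "\<bar>IQ - N * r\<bar> \<le> k * I + 2 * C * (N - k)"
    using main unfolding IQ_def N_def r_def k_def I_def c_def C_def .
  have e1: "(1 / N) * IQ - r = (IQ - N * r) / N" using Npos by (simp add: field_simps)
  have "\<bar>(1 / N) * IQ - r\<bar> = \<bar>IQ - N * r\<bar> / N" unfolding e1 using Npos by (simp add: abs_divide)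
  also have "\<dots> \<le> (k * I + 2 * C * (N - k)) / N"
    using divide_right_mono[OF main' less_imp_le[OF Npos]] .
  also have "\<dots> = (k / N) * I + 2 * C * (1 - k / N)"
    using Npos by (simp add: field_simps)
  also have "\<dots> \<le> I + 2 * C * (1 - k / N)"
  proof -
    have "k / N \<le> 1" using kN Npos by simp
    then have "(k / N) * I \<le> 1 * I" using I0 by (rule mult_right_mono)
    then show ?thesis by simp
  qed
  finally show ?thesis unfolding N_def I_def IQ_def r_def k_def C_def \<Lambda>_def K_def .
qed

lemma ER_int_lim: "(\<lambda>R. \<integral>\<sigma>. ER \<gamma> p R \<sigma> \<partial>\<mu>) \<longlonglongrightarrow> 0"
proof -
  have "(\<lambda>R. \<integral>\<sigma>. ER \<gamma> p R \<sigma> \<partial>\<mu>) \<longlonglongrightarrow> (\<integral>\<sigma>. 0 \<partial>\<mu>)"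
  proof (rule integral_dominated_convergence[where w="\<lambda>_. 2 * C0 \<gamma>"])
    show "(\<lambda>_. 0::real) \<in> borel_measurable \<mu>" by simp
    show "ER \<gamma> p R \<in> borel_measurable \<mu>" for R by (rule meas_mu[OF ER_meas[OF spec tinv]])
    show "integrable \<mu> (\<lambda>_. 2 * C0 \<gamma>)"
      by (simp add: finite_measure.integrable_const[OF prob_space.axioms(1)[OF mu_prob]])
    show "AE \<sigma> in \<mu>. (\<lambda>R. ER \<gamma> p R \<sigma>) \<longlonglongrightarrow> 0"
      using ae by eventually_elim (rule ER_lim[OF spec tinv])
    show "AE \<sigma> in \<mu>. norm (ER \<gamma> p R \<sigma>) \<le> 2 * C0 \<gamma>" for R
      using ER_nonneg[OF spec tinv] ER_le[OF spec tinv] by auto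
  qed
  then show ?thesis by simp
qed

lemma core: assumes e: "e > 0"
  shows "\<exists>R N. R \<le> N \<and> (\<forall>n\<ge>N. (\<integral>\<sigma>. ER \<gamma> p R \<sigma> \<partial>\<mu>)
     + 2 * C0 \<gamma> * (1 - real (card (Lam (n - R) :: (int^'d::{finite,linorder}) set)) / real (card (Lam n :: (int^'d::{finite,linorder}) set))) < e)"
proof -
  have e2: "e / 2 > 0" using e by simp
  obtain R where R: "\<forall>n\<ge>R. norm ((\<integral>\<sigma>. ER \<gamma> p n \<sigma> \<partial>\<mu>) - 0) < e / 2"
    using LIMSEQ_D[OF ER_int_lim e2] by blast
  define T where "T n = 2 * C0 \<gamma> * (1 - real (card (Lam (n - R) :: (int^'d::{finite,linorder}) set)) / real (card (Lam n :: (int^'d::{finite,linorder}) set)))" for n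
  have lim: "T \<longlonglongrightarrow> 2 * C0 \<gamma> * (1 - 1)"
    unfolding T_def by (intro tendsto_intros ratio_lim)
  then have lim0: "T \<longlonglongrightarrow> 0" by simp
  obtain N where N: "\<forall>n\<ge>N. norm (T n - 0) < e / 2"
    using LIMSEQ_D[OF lim0 e2] by blast
  have "(\<integral>\<sigma>. ER \<gamma> p R \<sigma> \<partial>\<mu>) + T n < e" if "n \<ge> max N R" for n
  proof -
    have "norm ((\<integral>\<sigma>. ER \<gamma> p R \<sigma> \<partial>\<mu>) - 0) < e / 2" using R by simp
    moreover have "norm (T n - 0) < e / 2" using N that by simp
    ultimately show ?thesis by simp
  qed
  then show ?thesis unfolding T_def by (intro exI[of _ R] exI[of _ "max N R"]) auto
qed

lemma Q_meas: "(\<lambda>\<sigma>. f (cyl (Lam n) \<sigma>) :: real) \<in> borel_measurable (Omega :: ('e,'d::{finite,linorder}) config measure)"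
proof (rule local_meas[of "Lam n"])
  fix \<sigma> \<sigma>' :: "('e,'d::{finite,linorder}) config" assume "\<And>x. x \<in> Lam n \<Longrightarrow> \<sigma> x = \<sigma>' x"
  then have "cyl (Lam n) \<sigma> = cyl (Lam n) \<sigma>'" by (rule cyl_dep)
  then show "f (cyl (Lam n) \<sigma>) = f (cyl (Lam n) \<sigma>')" by simp
qed auto

lemma part1:
  "uniform_limit UNIV
           (\<lambda>n \<omega>. (1 / real (card (Lam n :: (int ^ ('d::{finite,linorder})) set))) *
              (\<integral>\<sigma>. ln (measure (\<gamma> (Lam n) \<omega>) (cyl (Lam n) \<sigma>)
                        / measure (\<gamma> (Lam n) \<omega>) (cyl (Lam n) (\<lambda>_. p))) \<partial>\<mu>))
           (\<lambda>\<omega>. rhs p \<gamma> \<mu>) sequentially"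
  unfolding uniform_limit_sequentially_iff
proof (intro allI impI)
  fix e :: real assume e: "e > 0"
  obtain R N where RN: "R \<le> N" and RNe: "\<forall>n\<ge>N. (\<integral>\<sigma>. ER \<gamma> p R \<sigma> \<partial>\<mu>)
     + 2 * C0 \<gamma> * (1 - real (card (Lam (n - R) :: (int^'d::{finite,linorder}) set)) / real (card (Lam n :: (int^'d::{finite,linorder}) set))) < e"
    using core[OF e] by blast
  have "dist ((1 / real (card (Lam n :: (int ^ 'd::{finite,linorder}) set))) *
              (\<integral>\<sigma>. ln (measure (\<gamma> (Lam n) \<omega>) (cyl (Lam n) \<sigma>)
                        / measure (\<gamma> (Lam n) \<omega>) (cyl (Lam n) (\<lambda>_. p))) \<partial>\<mu>)) (rhs p \<gamma> \<mu>) < e"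
    if n: "n \<ge> N" for n \<omega>
  proof -
    define Q where "Q \<sigma> = ln (measure (\<gamma> (Lam n) \<omega>) (cyl (Lam n) \<sigma>) / measure (\<gamma> (Lam n) \<omega>) (cyl (Lam n) (\<lambda>_. p)))" for \<sigma>
    have Rn: "R \<le> n" using RN n by simp
    have Qm: "Q \<in> borel_measurable Omega" unfolding Q_def
      by (rule Q_meas[of "\<lambda>C. ln (measure (\<gamma> (Lam n) \<omega>) C / measure (\<gamma> (Lam n) \<omega>) (cyl (Lam n) (\<lambda>_. p)))"])
    have Qeq: "Q \<sigma> = ln (measure (\<gamma> (Lam n) \<omega>) (cyl (Lam n) \<sigma>)) - ln (measure (\<gamma> (Lam n) \<omega>) (cyl (Lam n) (\<lambda>_. p)))" for \<sigma>
      unfolding Q_def using sp_pos[OF spec finS_Lam, of n \<omega> \<sigma>] sp_pos[OF spec finS_Lam, of n \<omega> "\<lambda>_. p"] by (simp add: ln_div)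
    have bnd: "\<bar>Q \<sigma> - (\<Sum>x\<in>Lam n. Fpp (tau x \<sigma>))\<bar>
         \<le> (\<Sum>x\<in>Lam (n - R). ER \<gamma> p R (tau x \<sigma>)) + 2 * C0 \<gamma> * (real (card (Lam n :: (int^'d::{finite,linorder}) set)) - real (card (Lam (n - R) :: (int^'d::{finite,linorder}) set)))" for \<sigma>
      unfolding Qeq Fpp_def by (rule pw_bound[OF spec tinv Rn])
    have "\<bar>(1 / real (card (Lam n :: (int^'d::{finite,linorder}) set))) * (\<integral>\<sigma>. Q \<sigma> \<partial>\<mu>) - rhs p \<gamma> \<mu>\<bar>
      \<le> (\<integral>\<sigma>. ER \<gamma> p R \<sigma> \<partial>\<mu>) + 2 * C0 \<gamma> * (1 - real (card (Lam (n - R) :: (int^'d::{finite,linorder}) set)) / real (card (Lam n :: (int^'d::{finite,linorder}) set)))"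
      by (rule main_est[OF Qm Rn bnd])
    also have "\<dots> < e" using RNe n by blast
    finally show ?thesis unfolding Q_def dist_real_def .
  qed
  then show "\<exists>N. \<forall>n\<ge>N. \<forall>\<omega>\<in>UNIV. dist ((1 / real (card (Lam n :: (int ^ 'd::{finite,linorder}) set))) *
              (\<integral>\<sigma>. ln (measure (\<gamma> (Lam n) \<omega>) (cyl (Lam n) \<sigma>)
                        / measure (\<gamma> (Lam n) \<omega>) (cyl (Lam n) (\<lambda>_. p))) \<partial>\<mu>)) (rhs p \<gamma> \<mu>) < e"
    by blast
qed

lemma gibbs_facts: assumes "\<nu> \<in> Gibbs \<gamma>" shows "prob_space \<nu>" "sets \<nu> = sets Omega"
  using assms unfolding Gibbs_def by auto

lemma gibbs_pos:
  assumes nu: "\<nu> \<in> Gibbs \<gamma>"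
  shows "0 < measure \<nu> (cyl (Lam n) \<theta>)"
proof -
  obtain a where a: "a > 0" "\<And>\<sigma> \<eta>. a < measure (\<gamma> (Lam n) \<eta>) (cyl (Lam n) \<sigma>)"
    using sp_nonnull[OF spec finS_Lam] by blast
  have P: "prob_space \<nu>" and S: "sets \<nu> = sets Omega" using gibbs_facts[OF nu] by auto
  have m: "(\<lambda>\<omega>. measure (\<gamma> (Lam n) \<omega>) (cyl (Lam n) \<theta>)) \<in> borel_measurable \<nu>"
    using sp_meas[OF spec finS_Lam cyl_sets_Omega[OF finite_Lam]] measurable_cong_sets[OF S refl] by blast
  have i: "integrable \<nu> (\<lambda>\<omega>. measure (\<gamma> (Lam n) \<omega>) (cyl (Lam n) \<theta>))"
    by (rule finite_measure.integrable_const_bound[OF prob_space.axioms(1)[OF P], where B=1])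
       (use m prob_space.prob_le_1[OF sp_prob[OF spec finS_Lam]] in auto)
  have "a = (\<integral>\<omega>. a \<partial>\<nu>)" using prob_space.prob_space[OF P] by simp
  also have "\<dots> \<le> (\<integral>\<omega>. measure (\<gamma> (Lam n) \<omega>) (cyl (Lam n) \<theta>) \<partial>\<nu>)"
    by (rule Bochner_Integration.integral_mono[OF _ i])
       (use a finite_measure.integrable_const[OF prob_space.axioms(1)[OF P]] in \<open>auto intro: less_imp_le\<close>)
  also have "\<dots> = measure \<nu> (cyl (Lam n) \<theta>)"
    by (rule gibbs_int[OF spec tinv nu finS_Lam cyl_sets_Omega[OF finite_Lam], symmetric])
  finally show ?thesis using a by simp
qed

lemma gibbs_bound:
  assumes nu: "\<nu> \<in> Gibbs \<gamma>" and "\<And>\<omega>. \<bar>ln (measure (\<gamma> (Lam n) \<omega>) (cyl (Lam n) \<sigma>)) - ln (measure (\<gamma> (Lam n) \<omega>) (cyl (Lam n) (\<lambda>_. p))) - A\<bar> \<le> B"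
  shows "\<bar>ln (measure \<nu> (cyl (Lam n) \<sigma>)) - ln (measure \<nu> (cyl (Lam n) (\<lambda>_. p))) - A\<bar> \<le> B"
proof -
  have P: "prob_space \<nu>" and S: "sets \<nu> = sets Omega" using gibbs_facts[OF nu] by auto
  define a where "a \<omega> = measure (\<gamma> (Lam n) \<omega>) (cyl (Lam n) \<sigma>)" for \<omega>
  define b where "b \<omega> = measure (\<gamma> (Lam n) \<omega>) (cyl (Lam n) (\<lambda>_. p))" for \<omega>
  have ap: "0 < a \<omega>" "0 < b \<omega>" for \<omega> unfolding a_def b_def by (rule sp_pos[OF spec finS_Lam])+
  have intg: "integrable \<nu> (\<lambda>\<omega>. measure (\<gamma> (Lam n) \<omega>) (cyl (Lam n) \<theta>))" for \<theta>
  proof -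
    have m: "(\<lambda>\<omega>. measure (\<gamma> (Lam n) \<omega>) (cyl (Lam n) \<theta>)) \<in> borel_measurable \<nu>"
      using sp_meas[OF spec finS_Lam cyl_sets_Omega[OF finite_Lam]] measurable_cong_sets[OF S refl] by blast
    show ?thesis
      by (rule finite_measure.integrable_const_bound[OF prob_space.axioms(1)[OF P], where B=1])
         (use m prob_space.prob_le_1[OF sp_prob[OF spec finS_Lam]] in auto)
  qed
  have ai: "integrable \<nu> a" and bi: "integrable \<nu> b" unfolding a_def b_def by (rule intg)+
  have na: "measure \<nu> (cyl (Lam n) \<sigma>) = (\<integral>\<omega>. a \<omega> \<partial>\<nu>)" unfolding a_def
    by (rule gibbs_int[OF spec tinv nu finS_Lam cyl_sets_Omega[OF finite_Lam]])
  have nb: "measure \<nu> (cyl (Lam n) (\<lambda>_. p)) = (\<integral>\<omega>. b \<omega> \<partial>\<nu>)" unfolding b_def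
    by (rule gibbs_int[OF spec tinv nu finS_Lam cyl_sets_Omega[OF finite_Lam]])
  have up: "a \<omega> \<le> exp (A + B) * b \<omega>" for \<omega>
    using exp_bound_of_ln[OF ap(1)[of \<omega>] ap(2)[of \<omega>]] assms(2)[of \<omega>] unfolding a_def b_def by (simp add: abs_le_iff)
  have lo: "exp (A - B) * b \<omega> \<le> a \<omega>" for \<omega>
    using exp_lbound_of_ln[OF ap(1)[of \<omega>] ap(2)[of \<omega>]] assms(2)[of \<omega>] unfolding a_def b_def by (simp add: abs_le_iff)
  have "(\<integral>\<omega>. a \<omega> \<partial>\<nu>) \<le> (\<integral>\<omega>. exp (A + B) * b \<omega> \<partial>\<nu>)"
    by (rule Bochner_Integration.integral_mono[OF ai]) (use bi up in auto)
  then have I1: "measure \<nu> (cyl (Lam n) \<sigma>) \<le> exp (A + B) * measure \<nu> (cyl (Lam n) (\<lambda>_. p))"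
    unfolding na nb by simp
  have "(\<integral>\<omega>. exp (A - B) * b \<omega> \<partial>\<nu>) \<le> (\<integral>\<omega>. a \<omega> \<partial>\<nu>)"
    by (rule Bochner_Integration.integral_mono[OF _ ai]) (use bi lo in auto)
  then have I2: "exp (A - B) * measure \<nu> (cyl (Lam n) (\<lambda>_. p)) \<le> measure \<nu> (cyl (Lam n) \<sigma>)"
    unfolding na nb by simp
  have p1: "0 < measure \<nu> (cyl (Lam n) \<sigma>)" and p2: "0 < measure \<nu> (cyl (Lam n) (\<lambda>_. p))"
    by (rule gibbs_pos[OF nu])+
  define x where "x = measure \<nu> (cyl (Lam n) \<sigma>)"
  define y where "y = measure \<nu> (cyl (Lam n) (\<lambda>_. p))"
  have xy: "0 < x" "0 < y" "x \<le> exp (A + B) * y" "exp (A - B) * y \<le> x"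
    using p1 p2 I1 I2 unfolding x_def y_def by auto
  have "ln x \<le> ln (exp (A + B) * y)" using xy by (subst ln_le_cancel_iff) auto
  also have "\<dots> = A + B + ln y" using xy by (simp add: ln_mult)
  finally have u: "ln x - ln y - A \<le> B" by simp
  have "ln (exp (A - B) * y) \<le> ln x" using xy by (subst ln_le_cancel_iff) auto
  moreover have "ln (exp (A - B) * y) = A - B + ln y" using xy by (simp add: ln_mult)
  ultimately have l: "- B \<le> ln x - ln y - A" by simp
  show ?thesis using u l unfolding x_def y_def by (simp add: abs_le_iff)
qed

lemma part2:
  assumes nu: "\<nu> \<in> Gibbs \<gamma>"
  shows "(\<lambda>n. (1 / real (card (Lam n :: (int ^ ('d::{finite,linorder})) set))) *
              (\<integral>\<sigma>. ln (measure \<nu> (cyl (Lam n) \<sigma>) / measure \<nu> (cyl (Lam n) (\<lambda>_. p))) \<partial>\<mu>))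
           \<longlonglongrightarrow> rhs p \<gamma> \<mu>"
proof (rule LIMSEQ_I)
  fix e :: real assume e: "e > 0"
  obtain R N where RN: "R \<le> N" and RNe: "\<forall>n\<ge>N. (\<integral>\<sigma>. ER \<gamma> p R \<sigma> \<partial>\<mu>)
     + 2 * C0 \<gamma> * (1 - real (card (Lam (n - R) :: (int^'d::{finite,linorder}) set)) / real (card (Lam n :: (int^'d::{finite,linorder}) set))) < e"
    using core[OF e] by blast
  have "norm ((1 / real (card (Lam n :: (int ^ ('d::{finite,linorder})) set))) *
              (\<integral>\<sigma>. ln (measure \<nu> (cyl (Lam n) \<sigma>) / measure \<nu> (cyl (Lam n) (\<lambda>_. p))) \<partial>\<mu>) - rhs p \<gamma> \<mu>) < e"
    if n: "n \<ge> N" for n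
  proof -
    define Q where "Q \<sigma> = ln (measure \<nu> (cyl (Lam n) \<sigma>) / measure \<nu> (cyl (Lam n) (\<lambda>_. p)))" for \<sigma>
    have Rn: "R \<le> n" using RN n by simp
    have Qm: "Q \<in> borel_measurable Omega" unfolding Q_def
      by (rule Q_meas[of "\<lambda>C. ln (measure \<nu> C / measure \<nu> (cyl (Lam n) (\<lambda>_. p)))"])
    have Qeq: "Q \<sigma> = ln (measure \<nu> (cyl (Lam n) \<sigma>)) - ln (measure \<nu> (cyl (Lam n) (\<lambda>_. p)))" for \<sigma>
      unfolding Q_def using gibbs_pos[OF nu, of n \<sigma>] gibbs_pos[OF nu, of n "\<lambda>_. p"] by (simp add: ln_div)
    have bnd: "\<bar>Q \<sigma> - (\<Sum>x\<in>Lam n. Fpp (tau x \<sigma>))\<bar>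
         \<le> (\<Sum>x\<in>Lam (n - R). ER \<gamma> p R (tau x \<sigma>)) + 2 * C0 \<gamma> * (real (card (Lam n :: (int^'d::{finite,linorder}) set)) - real (card (Lam (n - R) :: (int^'d::{finite,linorder}) set)))" for \<sigma>
      unfolding Qeq
      by (rule gibbs_bound[OF nu]) (unfold Fpp_def, rule pw_bound[OF spec tinv Rn])
    have "\<bar>(1 / real (card (Lam n :: (int^'d::{finite,linorder}) set))) * (\<integral>\<sigma>. Q \<sigma> \<partial>\<mu>) - rhs p \<gamma> \<mu>\<bar>
      \<le> (\<integral>\<sigma>. ER \<gamma> p R \<sigma> \<partial>\<mu>) + 2 * C0 \<gamma> * (1 - real (card (Lam (n - R) :: (int^'d::{finite,linorder}) set)) / real (card (Lam n :: (int^'d::{finite,linorder}) set)))"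
      by (rule main_est[OF Qm Rn bnd])
    also have "\<dots> < e" using RNe n by blast
    finally show ?thesis unfolding Q_def real_norm_def .
  qed
  then show "\<exists>no. \<forall>n\<ge>no. norm ((1 / real (card (Lam n :: (int ^ ('d::{finite,linorder})) set))) *
              (\<integral>\<sigma>. ln (measure \<nu> (cyl (Lam n) \<sigma>) / measure \<nu> (cyl (Lam n) (\<lambda>_. p))) \<partial>\<mu>) - rhs p \<gamma> \<mu>) < e"
    by blast
qed

end

theorem lemma3p7:
  fixes \<gamma> :: "('e::finite, 'd::{finite,linorder}) spec"
    and \<mu> :: "('e, 'd) config measure"
    and p :: 'e
  assumes "is_specification \<gamma>"
    and "spec_translation_invariant \<gamma>"
    and "inv_prob \<mu>"
    and "AE \<sigma> in \<mu>. plus_ext p \<sigma> \<in> Omega_gamma \<gamma>"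
  shows "uniform_limit UNIV
           (\<lambda>n \<omega>. (1 / real (card (Lam n :: (int ^ ('d::{finite,linorder})) set))) *
              (\<integral>\<sigma>. ln (measure (\<gamma> (Lam n) \<omega>) (cyl (Lam n) \<sigma>)
                        / measure (\<gamma> (Lam n) \<omega>) (cyl (Lam n) (\<lambda>_. p))) \<partial>\<mu>))
           (\<lambda>\<omega>. rhs p \<gamma> \<mu>) sequentially
         \<and> (\<forall>\<nu>\<in>Gibbs \<gamma>.
           (\<lambda>n. (1 / real (card (Lam n :: (int ^ ('d::{finite,linorder})) set))) *
              (\<integral>\<sigma>. ln (measure \<nu> (cyl (Lam n) \<sigma>) / measure \<nu> (cyl (Lam n) (\<lambda>_. p))) \<partial>\<mu>))
           \<longlonglongrightarrow> rhs p \<gamma> \<mu>)"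
  using part1[OF assms] part2[OF assms] by blast

end
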